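(* Let $N\ge0$ be an integer, let $\phi,\psi\in L^2(\mathbb{Q}_p)$ with $\operatorname{supp}\phi,\operatorname{supp}\psi\subset B_N(0)$, and let $b\in I_p$ with $|b|_p\le p^N$. If $$\psi(\cdot-b)\in\overline{\operatorname{span}\{\phi(p^{-1}x-a):\ a\in I_p\}}$$ (closure in $L^2(\mathbb{Q}_p)$), then there exist complex numbers $h^\psi_{k,b}$, $k=0,\dots,p^{N+1}-1$, such that $$\psi(x-b)=\sum_{k=0}^{p^{N+1}-1}h^\psi_{k,b}\,\phi\Big(\frac{x}{p}-\frac{k}{p^{N+1}}\Big)$$ for all $x\in\mathbb{Q}_p$ (as elements of $L^2(\mathbb{Q}_p)$).
   Context: $p$ is a prime, $\mathbb{Q}_p$ the field of $p$-adic numbers with norm $|\cdot|_p$ and Haar measure $dx$. Every nonzero $x\in\mathbb{Q}_p$ has canonical form $x=p^{\gamma}\sum_{j\ge0}x_jp^j$ with $\gamma\in\mathbb{Z}$, $x_j\in\{0,\dots,p-1\}$, $x_0\ne0$; its fractional part is $\{x\}_p=p^{\gamma}\sum_{j=0}^{-\gamma-1}x_jp^j$, and $\{0\}_p=0$. $I_p=\{a\in\mathbb{Q}_p:\{a\}_p=a\}$. $B_\gamma(a)=\{x\in\mathbb{Q}_p:|x-a|_p\le p^\gamma\}$. *)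

theory Defs
  imports "HOL-Analysis.Analysis"
begin

text \<open>
  We use the isomorphism
  Q_p = inverse limit over n of Q_p / p^n Z_p, and Q_p / p^n Z_p = Z[1/p] / p^n Z.
  A p-adic number x is represented by the sequence of its canonical residues
  x n in Z[1/p] with 0 <= x n < p^n and x = x n (mod p^n Z_p);
  x 0 is exactly the p-adic fractional part of x.
\<close>

type_synonym padic = "nat \<Rightarrow> rat"

definition rmod :: "rat \<Rightarrow> rat \<Rightarrow> rat" where
  "rmod x m = x - m * of_int \<lfloor>x / m\<rfloor>"

definition pint :: "nat \<Rightarrow> rat \<Rightarrow> bool" where
  "pint p q \<longleftrightarrow> (\<exists>(m::int) (k::nat). q = of_int m / of_nat (p ^ k))"

definition Qp :: "nat \<Rightarrow> padic set" where
  "Qp p = {x. \<forall>n. pint p (x n) \<and> 0 \<le> x n \<and> x n < of_nat (p ^ n)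
                 \<and> x n = rmod (x (Suc n)) (of_nat (p ^ n))}"

text \<open>Embedding of Z[1/p] (rationals whose denominator is a power of p) into Q_p.\<close>
definition qemb :: "nat \<Rightarrow> rat \<Rightarrow> padic" where
  "qemb p q = (\<lambda>n. rmod q (of_nat (p ^ n)))"

definition pzero :: padic where "pzero = (\<lambda>n. 0)"

definition padd :: "nat \<Rightarrow> padic \<Rightarrow> padic \<Rightarrow> padic" where
  "padd p x y = (\<lambda>n. rmod (x n + y n) (of_nat (p ^ n)))"

definition psub :: "nat \<Rightarrow> padic \<Rightarrow> padic \<Rightarrow> padic" where
  "psub p x y = (\<lambda>n. rmod (x n - y n) (of_nat (p ^ n)))"

text \<open>Multiplication by p^{-1}, i.e. x/p.\<close>
definition pdivp :: "nat \<Rightarrow> padic \<Rightarrow> padic" where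
  "pdivp p x = (\<lambda>n. x (Suc n) / of_nat p)"

definition pfrac :: "nat \<Rightarrow> padic \<Rightarrow> padic" where
  "pfrac p x = qemb p (x 0)"

text \<open>p-adic norm: |x|_p = p^(-gamma) for x = p^gamma (x_0 + x_1 p + ...), |0|_p = 0.
  If x 0 (the fractional part) is nonzero its reduced denominator is p^(-gamma);
  otherwise x is in Z_p and gamma is the largest n with x = 0 mod p^n.\<close>
definition pnorm :: "nat \<Rightarrow> padic \<Rightarrow> real" where
  "pnorm p x = (if x 0 \<noteq> 0 then real_of_int (snd (quotient_of (x 0)))
                else if (\<forall>n. x n = 0) then 0
                else real p powi (- int (GREATEST n. x n = 0)))"

definition Ip :: "nat \<Rightarrow> padic set" where
  "Ip p = {a \<in> Qp p. pfrac p a = a}"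

definition pball :: "nat \<Rightarrow> int \<Rightarrow> padic \<Rightarrow> padic set" where
  "pball p \<gamma> a = {x \<in> Qp p. pnorm p (psub p x a) \<le> real p powi \<gamma>}"

text \<open>Haar measure on Q_p: the measure on the sigma-algebra generated by the balls
  (= the Borel sets) with mu(B_gamma(a)) = p^gamma.\<close>
definition haar :: "nat \<Rightarrow> padic measure" where
  "haar p = extend_measure (Qp p) {(\<gamma>, a). a \<in> Qp p} (\<lambda>(\<gamma>, a). pball p \<gamma> a)
              (\<lambda>(\<gamma>, a). ennreal (real p powi \<gamma>))"

definition L2 :: "nat \<Rightarrow> (padic \<Rightarrow> complex) set" where
  "L2 p = {f. f \<in> borel_measurable (haar p) \<and> integrable (haar p) (\<lambda>x. (cmod (f x))\<^sup>2)}"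

end

theory Submission
  imports Defs
begin


definition qcong :: "rat \<Rightarrow> rat \<Rightarrow> rat \<Rightarrow> bool" where
  "qcong u v m \<longleftrightarrow> (\<exists>k::int. u - v = of_int k * m)"

lemma qcong_refl[simp]: "qcong u u m"
  unfolding qcong_def by (rule exI[of _ 0]) simp

lemma qcong_sym: "qcong u v m \<Longrightarrow> qcong v u m"
  unfolding qcong_def
proof (elim exE)
  fix k assume "u - v = of_int k * m"
  then have "v - u = of_int (- k) * m" by (simp add: algebra_simps)
  then show "\<exists>k. v - u = rat_of_int k * m" by blast
qed

lemma qcong_trans: "qcong u v m \<Longrightarrow> qcong v w m \<Longrightarrow> qcong u w m"
  unfolding qcong_def
proof (elim exE)
  fix k l assume "u - v = of_int k * m" "v - w = of_int l * m"
  then have "u - w = of_int (k + l) * m" by (simp add: algebra_simps)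
  then show "\<exists>k. u - w = rat_of_int k * m" by blast
qed

lemma qcong_add: "qcong u v m \<Longrightarrow> qcong u' v' m \<Longrightarrow> qcong (u + u') (v + v') m"
  unfolding qcong_def
proof (elim exE)
  fix k l assume "u - v = of_int k * m" "u' - v' = of_int l * m"
  then have "(u + u') - (v + v') = of_int (k + l) * m" by (simp add: algebra_simps)
  then show "\<exists>k. (u + u') - (v + v') = rat_of_int k * m" by blast
qed

lemma qcong_diff: "qcong u v m \<Longrightarrow> qcong u' v' m \<Longrightarrow> qcong (u - u') (v - v') m"
  unfolding qcong_def
proof (elim exE)
  fix k l assume "u - v = of_int k * m" "u' - v' = of_int l * m"
  then have "(u - u') - (v - v') = of_int (k - l) * m" by (simp add: algebra_simps)
  then show "\<exists>k. (u - u') - (v - v') = rat_of_int k * m" by blast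
qed

lemma qcong_weaken: "qcong u v m \<Longrightarrow> m = of_int j * m' \<Longrightarrow> qcong u v m'"
  unfolding qcong_def
proof (elim exE)
  fix k assume "u - v = of_int k * m" "m = of_int j * m'"
  then have "u - v = of_int (k * j) * m'" by simp
  then show "\<exists>k. u - v = rat_of_int k * m'" by blast
qed

lemma qcong_scale: "c \<noteq> 0 \<Longrightarrow> qcong (c * u) (c * v) (c * m) \<longleftrightarrow> qcong u v m"
  unfolding qcong_def
proof -
  assume c: "c \<noteq> 0"
  have "\<And>k. (c * u - c * v = of_int k * (c * m)) \<longleftrightarrow> (u - v = of_int k * m)"
  proof -
    fix k
    have "c * u - c * v = c * (u - v)" by (simp add: algebra_simps)
    moreover have "of_int k * (c * m) = c * (of_int k * m)" by (simp add: algebra_simps)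
    ultimately show "(c * u - c * v = of_int k * (c * m)) \<longleftrightarrow> (u - v = of_int k * m)"
      using c by simp
  qed
  then show "(\<exists>k::int. c * u - c * v = of_int k * (c * m)) = (\<exists>k::int. u - v = of_int k * m)"
    by simp
qed

lemma qcong_left: "qcong u u' m \<Longrightarrow> qcong u v m \<longleftrightarrow> qcong u' v m"
  by (meson qcong_sym qcong_trans)

lemma qcong_right: "qcong v v' m \<Longrightarrow> qcong u v m \<longleftrightarrow> qcong u v' m"
  by (meson qcong_sym qcong_trans)

lemma qcong_diff_iff: "qcong (u - w) v m \<longleftrightarrow> qcong u (v + w) m"
  unfolding qcong_def by (simp add: algebra_simps)

lemma rmod_bounds: assumes "m > 0" shows "0 \<le> rmod u m" "rmod u m < m"
proof -
  have "of_int \<lfloor>u / m\<rfloor> \<le> u / m" by (rule of_int_floor_le)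
  then have "of_int \<lfloor>u / m\<rfloor> * m \<le> u" using pos_le_divide_eq[OF assms] by blast
  then have "m * of_int \<lfloor>u / m\<rfloor> \<le> u" by (simp add: mult.commute)
  then show "0 \<le> rmod u m" unfolding rmod_def by simp
  have "u / m < of_int \<lfloor>u / m\<rfloor> + 1" using floor_correct[of "u / m"] by simp
  then have "u < m * of_int \<lfloor>u / m\<rfloor> + m" using assms by (simp add: field_simps)
  then show "rmod u m < m" unfolding rmod_def by simp
qed

lemma qcong_rmod: "qcong (rmod u m) u m"
  unfolding qcong_def rmod_def by (rule exI[of _ "- \<lfloor>u / m\<rfloor>"]) (simp add: algebra_simps)

lemma qcong_range_eq: assumes "0 \<le> u" "u < m" "0 \<le> v" "v < m" "qcong u v m" shows "u = v"
proof -
  obtain k where k: "u - v = of_int k * m" using assms(5) unfolding qcong_def by blast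
  have "k = 0"
  proof (rule ccontr)
    assume "k \<noteq> 0"
    then have "k \<ge> 1 \<or> k \<le> -1" by linarith
    then show False
    proof
      assume "k \<ge> 1" then have "of_int k * m \<ge> 1 * m" using assms
        by (intro mult_right_mono) auto
      with k assms show False by simp
    next
      assume "k \<le> -1" then have "of_int k * m \<le> (-1) * m" using assms
        by (intro mult_right_mono) auto
      with k assms show False by simp
    qed
  qed
  with k show ?thesis by simp
qed

lemma rmod_eq_iff: assumes "m > 0" shows "rmod u m = rmod v m \<longleftrightarrow> qcong u v m"
proof
  assume "rmod u m = rmod v m"
  then show "qcong u v m" using qcong_rmod[of u m] qcong_rmod[of v m]
    by (metis qcong_sym qcong_trans)
next
  assume "qcong u v m"
  then have "qcong (rmod u m) (rmod v m) m" using qcong_rmod[of u m] qcong_rmod[of v m]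
    by (metis qcong_sym qcong_trans)
  then show "rmod u m = rmod v m" using rmod_bounds[OF assms] by (intro qcong_range_eq) auto
qed

lemma rmod_id: assumes "0 \<le> u" "u < m" shows "rmod u m = u"
  using qcong_range_eq[OF rmod_bounds(1,2) assms qcong_rmod] assms by auto

lemma pint_int: "pint p (of_int m)"
  unfolding pint_def by (rule exI[of _ m], rule exI[of _ 0]) simp

lemma pint_add: assumes "p > 0" "pint p u" "pint p v" shows "pint p (u + v)"
proof -
  obtain m k m' k' where u: "u = of_int m / of_nat (p ^ k)" and v: "v = of_int m' / of_nat (p ^ k')"
    using assms unfolding pint_def by blast
  have "u + v = of_int (m * p ^ k' + m' * p ^ k) / of_nat (p ^ (k + k'))"
    using assms(1) by (simp add: u v field_simps power_add)
  then show ?thesis unfolding pint_def by blast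
qed

lemma pint_mult: assumes "p > 0" "pint p u" "pint p v" shows "pint p (u * v)"
proof -
  obtain m k m' k' where u: "u = of_int m / of_nat (p ^ k)" and v: "v = of_int m' / of_nat (p ^ k')"
    using assms unfolding pint_def by blast
  have "u * v = of_int (m * m') / of_nat (p ^ (k + k'))"
    using assms(1) by (simp add: u v field_simps power_add)
  then show ?thesis unfolding pint_def by blast
qed

lemma pint_uminus: "pint p u \<Longrightarrow> pint p (- u)"
  unfolding pint_def
proof (elim exE)
  fix m k assume "u = of_int m / of_nat (p ^ k)"
  then have "- u = of_int (- m) / of_nat (p ^ k)" by simp
  then show "\<exists>m k. - u = of_int m / of_nat (p ^ k)" by blast
qed

lemma pint_diff: "p > 0 \<Longrightarrow> pint p u \<Longrightarrow> pint p v \<Longrightarrow> pint p (u - v)"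
  using pint_add[of p u "- v"] pint_uminus by simp

lemma pint_divp: assumes "p > 0" "pint p u" shows "pint p (u / of_nat p)"
proof -
  obtain m k where u: "u = of_int m / of_nat (p ^ k)" using assms unfolding pint_def by blast
  have "u / of_nat p = of_int m / of_nat (p ^ (Suc k))" using assms(1) by (simp add: u field_simps)
  then show ?thesis unfolding pint_def by blast
qed

lemma pint_nat: "pint p (of_nat n)"
  using pint_int[of p "int n"] by simp

lemma pint_rmod: assumes "p > 0" "pint p u" shows "pint p (rmod u (of_nat (p ^ n)))"
  unfolding rmod_def using assms
  by (intro pint_diff pint_mult pint_int pint_nat) auto

lemma Qp_D: assumes "x \<in> Qp p"
  shows "pint p (x n) \<and> 0 \<le> x n \<and> x n < of_nat (p ^ n) \<and> x n = rmod (x (Suc n)) (of_nat (p ^ n))"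
  using assms[unfolded Qp_def mem_Collect_eq] by (rule spec)

lemma Qp_bounds: "x \<in> Qp p \<Longrightarrow> 0 \<le> x n \<and> x n < of_nat (p ^ n)"
  using Qp_D by blast

lemma Qp_pint: "x \<in> Qp p \<Longrightarrow> pint p (x n)"
  using Qp_D by blast

lemma Qp_cong_Suc: assumes "x \<in> Qp p" shows "qcong (x n) (x (Suc n)) (of_nat (p ^ n))"
proof -
  have "x n = rmod (x (Suc n)) (of_nat (p ^ n))" using Qp_D[OF assms] by blast
  then show ?thesis using qcong_rmod[of "x (Suc n)" "of_nat (p ^ n)"] by simp
qed

lemma pow_dvd_rat: assumes "n \<le> m" shows "(of_nat (p ^ m) :: rat) = of_int (int (p ^ (m - n))) * of_nat (p ^ n)"
proof -
  obtain d where d: "m = n + d" using assms le_Suc_ex by blast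
  then show ?thesis by (simp add: power_add)
qed

lemma Qp_cong: assumes "x \<in> Qp p" "n \<le> m" shows "qcong (x n) (x m) (of_nat (p ^ n))"
  using assms(2)
proof (induction m rule: dec_induct)
  case base then show ?case by simp
next
  case (step m)
  have "qcong (x m) (x (Suc m)) (of_nat (p ^ n))"
    by (rule qcong_weaken[OF Qp_cong_Suc[OF assms(1), of m] pow_dvd_rat[OF step(1)]])
  with step show ?case using qcong_trans by blast
qed

lemma Qp_rmodI:
  assumes "p > 0" "\<And>n. pint p (w n)" "\<And>n. qcong (w n) (w (Suc n)) (of_nat (p ^ n))"
  shows "(\<lambda>n. rmod (w n) (of_nat (p ^ n))) \<in> Qp p"
  unfolding Qp_def
proof (safe)
  fix n
  have pos: "(of_nat (p ^ n) :: rat) > 0" using assms(1) by simp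
  show "pint p (rmod (w n) (of_nat (p ^ n)))" using pint_rmod assms by blast
  show "0 \<le> rmod (w n) (of_nat (p ^ n))" "rmod (w n) (of_nat (p ^ n)) < of_nat (p ^ n)"
    using rmod_bounds[OF pos] by auto
  have "qcong (rmod (w (Suc n)) (of_nat (p ^ Suc n))) (w (Suc n)) (of_nat (p ^ n))"
    by (rule qcong_weaken[OF qcong_rmod pow_dvd_rat[of n "Suc n" p]]) simp
  then have "qcong (w n) (rmod (w (Suc n)) (of_nat (p ^ Suc n))) (of_nat (p ^ n))"
    using assms(3) qcong_sym qcong_trans by blast
  then show "rmod (w n) (of_nat (p ^ n)) = rmod (rmod (w (Suc n)) (of_nat (p ^ Suc n))) (of_nat (p ^ n))"
    using rmod_eq_iff[OF pos] by blast
qed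


definition mu :: "nat \<Rightarrow> int \<Rightarrow> rat" where "mu p \<gamma> = (of_nat p) powi (- \<gamma>)"

lemma mu_pos: "p > 0 \<Longrightarrow> mu p \<gamma> > 0"
  unfolding mu_def by simp

lemma pow_mu: assumes "p > 0" "nat (- \<gamma>) \<le> j"
  shows "(of_nat (p ^ j) :: rat) = of_int (int (p ^ nat (int j + \<gamma>))) * mu p \<gamma>"
proof -
  have nn: "int j + \<gamma> = int (nat (int j + \<gamma>))" using assms(2) by linarith
  have "(of_nat (p ^ j) :: rat) = of_nat p powi (int j)" by simp
  also have "\<dots> = of_nat p powi ((int j + \<gamma>) + (- \<gamma>))" by simp
  also have "\<dots> = of_nat p powi (int j + \<gamma>) * of_nat p powi (- \<gamma>)"
    using assms(1) by (intro power_int_add) simp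
  also have "of_nat p powi (int j + \<gamma>) = (of_nat p :: rat) ^ nat (int j + \<gamma>)"
    by (subst nn) (simp only: power_int_of_nat)
  finally show ?thesis unfolding mu_def by simp
qed

lemma mu_minus1: assumes "p > 0" shows "mu p (\<gamma> - 1) = of_nat p * mu p \<gamma>"
proof -
  have "mu p (\<gamma> - 1) = of_nat p powi (1 + (- \<gamma>))" unfolding mu_def by (simp add: algebra_simps)
  also have "\<dots> = of_nat p powi 1 * of_nat p powi (- \<gamma>)"
    using assms by (intro power_int_add) simp
  finally show ?thesis unfolding mu_def by simp
qed

lemma qcong_mu_pow: assumes "p > 0" "nat (- \<gamma>) \<le> j" "qcong u v (of_nat (p ^ j))"
  shows "qcong u v (mu p \<gamma>)"
  by (rule qcong_weaken[OF assms(3) pow_mu[OF assms(1,2)]])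

lemma qcong_mu_rmod: assumes "p > 0" "nat (- \<gamma>) \<le> j"
  shows "qcong (rmod u (of_nat (p ^ j))) u (mu p \<gamma>)"
  by (rule qcong_mu_pow[OF assms qcong_rmod])

lemma Qp_cong_mu: assumes "x \<in> Qp p" "p > 0" "nat (- \<gamma>) \<le> j" "j \<le> j'"
  shows "qcong (x j) (x j') (mu p \<gamma>)"
  by (rule qcong_mu_pow[OF assms(2,3) Qp_cong[OF assms(1,4)]])

lemma rng_zero: assumes "x \<in> Qp p" "p > 0"
  shows "qcong (x n) 0 (of_nat (p ^ n)) \<longleftrightarrow> x n = 0"
proof
  assume "qcong (x n) 0 (of_nat (p ^ n))"
  then show "x n = 0" using Qp_bounds[OF assms(1)] assms(2) by (intro qcong_range_eq) auto
qed simp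

lemma zero_down: assumes "x \<in> Qp p" "p > 0" "x n = 0" "m \<le> n" shows "x m = 0"
proof -
  have "qcong (x m) (x n) (of_nat (p ^ m))" using Qp_cong[OF assms(1,4)] .
  then show ?thesis using rng_zero[OF assms(1,2)] assms(3) by simp
qed

lemma powi_le_iff: assumes "(1::real) < a" shows "a powi m \<le> a powi n \<longleftrightarrow> m \<le> n"
proof
  assume "a powi m \<le> a powi n"
  show "m \<le> n"
  proof (rule ccontr)
    assume "\<not> m \<le> n" then have "n < m" by simp
    then have "a powi n < a powi m" using power_int_strict_increasing assms by blast
    with \<open>a powi m \<le> a powi n\<close> show False by simp
  qed
next
  assume "m \<le> n" then show "a powi m \<le> a powi n" using power_int_increasing[of m n a] assms by simp
qed

lemma pnorm_nz: "y 0 \<noteq> 0 \<Longrightarrow> pnorm p y = real_of_int (snd (quotient_of (y 0)))"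
  unfolding pnorm_def by simp

lemma pnorm_z1: "y 0 = 0 \<Longrightarrow> \<forall>n. y n = 0 \<Longrightarrow> pnorm p y = 0"
  unfolding pnorm_def by simp

lemma pnorm_z2: "y 0 = 0 \<Longrightarrow> \<not> (\<forall>n. y n = 0) \<Longrightarrow> pnorm p y = real p powi (- int (GREATEST n. y n = 0))"
  unfolding pnorm_def by (simp only: if_False if_True) simp

lemma pnorm_le:
  assumes p: "prime p" and y: "y \<in> Qp p"
  shows "pnorm p y \<le> real p powi \<gamma> \<longleftrightarrow> qcong (y (nat (- \<gamma>))) 0 (mu p \<gamma>)"
proof -
  have p1: "p > 1" using p prime_gt_1_nat by blast
  then have p0: "p > 0" by simp
  have rp1: "real p > 1" using p1 by simp
  have pos: "real p powi \<gamma> > 0" for \<gamma> using p0 by simp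
  show ?thesis
  proof (cases "\<gamma> < 0")
    case True
    define m where "m = nat (- \<gamma>)"
    have m1: "m \<ge> 1" using True unfolding m_def by simp
    have mum: "mu p \<gamma> = of_nat (p ^ m)"
    proof -
      have "- \<gamma> = int m" using True unfolding m_def by simp
      then show ?thesis unfolding mu_def by simp
    qed
    have rhs: "qcong (y (nat (- \<gamma>))) 0 (mu p \<gamma>) \<longleftrightarrow> y m = 0"
      unfolding mum m_def[symmetric] using rng_zero[OF y p0] by simp
    have lt1: "real p powi \<gamma> < 1"
      using power_int_strict_increasing[OF True rp1] by simp
    show ?thesis
    proof (cases "y 0 = 0")
      case False
      have "y m \<noteq> 0" using zero_down[OF y p0, of m 0] False by auto
      moreover
      obtain a d where ad: "quotient_of (y 0) = (a, d)" by (cases "quotient_of (y 0)")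
      have "d > 0" using quotient_of_denom_pos[OF ad] .
      then have "pnorm p y \<ge> 1" unfolding pnorm_def using False ad by simp
      ultimately show ?thesis using rhs lt1 by simp
    next
      case y0: True
      show ?thesis
      proof (cases "\<forall>n. y n = 0")
        case True
        then show ?thesis unfolding rhs unfolding pnorm_def using pos by simp
      next
        case False
        then obtain n0 where n0: "y n0 \<noteq> 0" by blast
        have bnd: "\<forall>n. y n = 0 \<longrightarrow> n \<le> n0"
        proof (intro allI impI)
          fix n assume "y n = 0"
          then show "n \<le> n0" using zero_down[OF y p0, of n n0] n0 by (cases "n \<le> n0") auto
        qed
        define g where "g = (GREATEST n. y n = 0)"
        have yg: "y g = 0" unfolding g_def using GreatestI_nat[of "\<lambda>n. y n = 0" 0 n0] y0 bnd by blast
        have gle: "\<And>n. y n = 0 \<Longrightarrow> n \<le> g" unfolding g_def using Greatest_le_nat[of "\<lambda>n. y n = 0" _ n0] bnd by blast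
        have iff: "y n = 0 \<longleftrightarrow> n \<le> g" for n using gle zero_down[OF y p0 yg] by blast
        have pn: "pnorm p y = real p powi (- int g)" unfolding g_def using pnorm_z2[of y p, OF y0 False] .
        have "pnorm p y \<le> real p powi \<gamma> \<longleftrightarrow> - int g \<le> \<gamma>" unfolding pn by (rule powi_le_iff[OF rp1])
        also have "\<dots> \<longleftrightarrow> m \<le> g" unfolding m_def using True by linarith
        also have "\<dots> \<longleftrightarrow> y m = 0" using iff by simp
        finally show ?thesis using rhs by simp
      qed
    qed
  next
    case False
    define G where "G = nat \<gamma>"
    have G: "\<gamma> = int G" using False unfolding G_def by simp
    have n0: "nat (- \<gamma>) = 0" using False by simp
    have rpg: "real p powi \<gamma> = real p ^ G" unfolding G by simp
    have mug: "mu p \<gamma> = 1 / of_nat (p ^ G)" unfolding mu_def G by (simp add: power_int_minus_divide)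
    show ?thesis
    proof (cases "y 0 = 0")
      case y0: True
      have "pnorm p y \<le> 1"
      proof (cases "\<forall>n. y n = 0")
        case True then show ?thesis using pnorm_z1[of y p, OF y0] by simp
      next
        case False
        have "real p powi (- int (GREATEST n. y n = 0)) \<le> real p powi 0"
          using power_int_increasing[of "- int (GREATEST n. y n = 0)" 0 "real p"] rp1 by simp
        then show ?thesis using pnorm_z2[of y p, OF y0 False] by simp
      qed
      moreover have "1 \<le> real p powi \<gamma>" unfolding rpg using rp1 by simp
      ultimately show ?thesis unfolding n0 using y0 by simp
    next
      case False
      obtain a d where ad: "quotient_of (y 0) = (a, d)" by (cases "quotient_of (y 0)")
      have d0: "d > 0" using quotient_of_denom_pos[OF ad] .
      have cop: "coprime a d" using quotient_of_coprime[OF ad] .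
      have y0ad: "y 0 = of_int a / of_int d" using quotient_of_div[OF ad] .
      have pn: "pnorm p y = real_of_int d" unfolding pnorm_def using False ad by simp
      obtain mm k where mk: "y 0 = of_int mm / of_nat (p ^ k)" using Qp_pint[OF y, of 0] unfolding pint_def by blast
      have "of_int a * of_nat (p ^ k) = (of_int mm * of_int d :: rat)"
        using y0ad mk d0 p0 by (simp add: field_simps)
      then have "a * int (p ^ k) = mm * d"
        by (metis of_int_eq_iff of_int_mult of_int_of_nat_eq)
      then have "d dvd a * int p ^ k" by simp
      then have "d dvd int p ^ k" using cop by (simp add: coprime_commute coprime_dvd_mult_right_iff)
      moreover have "prime (int p)" using p by simp
      ultimately obtain i where "normalize d = int p ^ i" using divides_primepow by blast
      then have di: "d = int p ^ i" using d0 by simp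
      have "pnorm p y \<le> real p powi \<gamma> \<longleftrightarrow> real p ^ i \<le> real p ^ G" unfolding pn rpg di by simp
      also have "\<dots> \<longleftrightarrow> i \<le> G" using rp1 by (rule power_increasing_iff)
      also have "\<dots> \<longleftrightarrow> d dvd int p ^ G"
      proof
        assume "i \<le> G" then show "d dvd int p ^ G" unfolding di by (rule le_imp_power_dvd)
      next
        assume "d dvd int p ^ G"
        then have "d \<le> int p ^ G" using p0 by (intro zdvd_imp_le) auto
        then have "int p ^ i \<le> int p ^ G" unfolding di .
        then show "i \<le> G" using p1 by (intro power_le_imp_le_exp[of "int p"]) auto
      qed
      also have "\<dots> \<longleftrightarrow> d dvd a * int p ^ G" using cop by (simp add: coprime_commute coprime_dvd_mult_right_iff)
      also have "\<dots> \<longleftrightarrow> qcong (y 0) 0 (mu p \<gamma>)"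
      proof
        assume "d dvd a * int p ^ G"
        then obtain t where t: "a * int p ^ G = d * t" by blast
        have "y 0 - 0 = of_int t * (1 / of_nat (p ^ G))"
        proof -
          have "(of_int a :: rat) * of_nat p ^ G = of_int d * of_int t" using t
            by (metis of_int_mult of_int_of_nat_eq of_int_power)
          then show ?thesis unfolding y0ad using d0 p0 by (simp add: field_simps)
        qed
        then show "qcong (y 0) 0 (mu p \<gamma>)" unfolding qcong_def mug by blast
      next
        assume "qcong (y 0) 0 (mu p \<gamma>)"
        then obtain t where t: "y 0 - 0 = of_int t * (1 / of_nat (p ^ G))" unfolding qcong_def mug by blast
        have "(of_int a :: rat) * of_nat p ^ G = of_int d * of_int t"
          using t unfolding y0ad using d0 p0 by (simp add: field_simps)
        then have "a * int p ^ G = d * t"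
          by (metis of_int_eq_iff of_int_mult of_int_of_nat_eq of_int_power)
        then show "d dvd a * int p ^ G" by simp
      qed
      finally show ?thesis unfolding n0 .
    qed
  qed
qed


lemma psub_Qp: assumes "p > 0" "x \<in> Qp p" "c \<in> Qp p" shows "psub p x c \<in> Qp p"
  unfolding psub_def
proof (rule Qp_rmodI[OF assms(1)])
  fix n
  show "pint p (x n - c n)" using pint_diff[OF assms(1) Qp_pint[OF assms(2)] Qp_pint[OF assms(3)]] .
  show "qcong (x n - c n) (x (Suc n) - c (Suc n)) (of_nat (p ^ n))"
    by (rule qcong_diff[OF Qp_cong_Suc[OF assms(2)] Qp_cong_Suc[OF assms(3)]])
qed

lemma padd_Qp: assumes "p > 0" "x \<in> Qp p" "c \<in> Qp p" shows "padd p x c \<in> Qp p"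
  unfolding padd_def
proof (rule Qp_rmodI[OF assms(1)])
  fix n
  show "pint p (x n + c n)" using pint_add[OF assms(1) Qp_pint[OF assms(2)] Qp_pint[OF assms(3)]] .
  show "qcong (x n + c n) (x (Suc n) + c (Suc n)) (of_nat (p ^ n))"
    by (rule qcong_add[OF Qp_cong_Suc[OF assms(2)] Qp_cong_Suc[OF assms(3)]])
qed

lemma qemb_Qp: assumes "p > 0" "pint p q" shows "qemb p q \<in> Qp p"
  unfolding qemb_def
proof (rule Qp_rmodI[OF assms(1)])
  fix n
  show "pint p q" by (rule assms(2))
  show "qcong q q (of_nat (p ^ n))" by (rule qcong_refl)
qed

definition dd :: "nat \<Rightarrow> padic \<Rightarrow> padic \<Rightarrow> padic" where
  "dd p a c = (\<lambda>n. rmod (of_nat p * (a n + c n)) (of_nat (p ^ n)))"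

lemma qcong_timesp: assumes "p > 0" "qcong u v (of_nat (p ^ n))"
  shows "qcong (of_nat p * u) (of_nat p * v) (of_nat (p ^ Suc n))"
proof -
  have "qcong (of_nat p * u) (of_nat p * v) (of_nat p * of_nat (p ^ n))"
    using qcong_scale[of "of_nat p" u v "of_nat (p ^ n)"] assms by simp
  then show ?thesis by simp
qed

lemma dd_Qp: assumes "p > 0" "a \<in> Qp p" "c \<in> Qp p" shows "dd p a c \<in> Qp p"
  unfolding dd_def
proof (rule Qp_rmodI[OF assms(1)])
  fix n
  show "pint p (of_nat p * (a n + c n))"
    by (rule pint_mult[OF assms(1) pint_nat pint_add[OF assms(1) Qp_pint[OF assms(2)] Qp_pint[OF assms(3)]]])
  have "qcong (a n + c n) (a (Suc n) + c (Suc n)) (of_nat (p ^ n))"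
    by (intro qcong_add Qp_cong_Suc assms)
  then have "qcong (of_nat p * (a n + c n)) (of_nat p * (a (Suc n) + c (Suc n))) (of_nat (p ^ Suc n))"
    using qcong_timesp assms(1) by blast
  then show "qcong (of_nat p * (a n + c n)) (of_nat p * (a (Suc n) + c (Suc n))) (of_nat (p ^ n))"
    by (rule qcong_weaken[OF _ pow_dvd_rat[of n "Suc n" p]]) simp_all
qed

lemma pdivp_eq: assumes "p > 0" "x \<in> Qp p"
  shows "pdivp p x = (\<lambda>n. rmod (x (Suc n) / of_nat p) (of_nat (p ^ n)))"
proof
  fix n
  have b: "0 \<le> x (Suc n)" "x (Suc n) < of_nat (p ^ Suc n)" using Qp_bounds[OF assms(2), of "Suc n"] by auto
  have pp: "(of_nat p :: rat) > 0" using assms(1) by simp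
  have "0 \<le> x (Suc n) / of_nat p" using b pp by simp
  moreover have "x (Suc n) < of_nat (p ^ n) * of_nat p" using b(2) by (simp add: mult.commute)
  then have "x (Suc n) / of_nat p < of_nat (p ^ n)"
    using pos_divide_less_eq[OF pp] by blast
  ultimately show "pdivp p x n = rmod (x (Suc n) / of_nat p) (of_nat (p ^ n))"
    unfolding pdivp_def by (simp add: rmod_id)
qed

lemma qcong_divp: assumes "p > 0" "qcong u v (of_nat (p ^ Suc n))"
  shows "qcong (u / of_nat p) (v / of_nat p) (of_nat (p ^ n))"
proof -
  have pp: "(of_nat p :: rat) \<noteq> 0" using assms(1) by simp
  have e: "\<And>w::rat. w = of_nat p * (w / of_nat p)" using pp by simp
  have "qcong (of_nat p * (u / of_nat p)) (of_nat p * (v / of_nat p)) (of_nat p * of_nat (p ^ n))"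
    using assms(2) e[of u] e[of v] by simp
  then show ?thesis by (simp only: qcong_scale[OF pp])
qed

lemma pdivp_Qp: assumes "p > 0" "x \<in> Qp p" shows "pdivp p x \<in> Qp p"
  unfolding pdivp_eq[OF assms]
proof (rule Qp_rmodI[OF assms(1)])
  fix n
  show "pint p (x (Suc n) / of_nat p)" by (rule pint_divp[OF assms(1) Qp_pint[OF assms(2)]])
  show "qcong (x (Suc n) / of_nat p) (x (Suc (Suc n)) / of_nat p) (of_nat (p ^ n))"
    by (rule qcong_divp[OF assms(1) Qp_cong_Suc[OF assms(2)]])
qed

lemma pball_char:
  assumes p: "prime p" and c: "c \<in> Qp p" and x: "x \<in> Qp p" and j: "nat (- \<gamma>) \<le> j"
  shows "x \<in> pball p \<gamma> c \<longleftrightarrow> qcong (x j) (c j) (mu p \<gamma>)"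
proof -
  have p0: "p > 0" using p prime_gt_0_nat by blast
  define j0 where "j0 = nat (- \<gamma>)"
  have "x \<in> pball p \<gamma> c \<longleftrightarrow> pnorm p (psub p x c) \<le> real p powi \<gamma>"
    unfolding pball_def using x by simp
  also have "\<dots> \<longleftrightarrow> qcong (psub p x c j0) 0 (mu p \<gamma>)"
    unfolding j0_def by (rule pnorm_le[OF p psub_Qp[OF p0 x c]])
  also have "\<dots> \<longleftrightarrow> qcong (x j0 - c j0) 0 (mu p \<gamma>)"
    unfolding psub_def by (rule qcong_left[OF qcong_mu_rmod[OF p0]]) (simp add: j0_def)
  also have "\<dots> \<longleftrightarrow> qcong (x j0) (c j0) (mu p \<gamma>)"
    by (simp add: qcong_diff_iff)
  also have "\<dots> \<longleftrightarrow> qcong (x j) (c j) (mu p \<gamma>)"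
  proof -
    have 1: "qcong (x j0) (x j) (mu p \<gamma>)" using Qp_cong_mu[OF x p0 _ j] j0_def by simp
    have 2: "qcong (c j0) (c j) (mu p \<gamma>)" using Qp_cong_mu[OF c p0 _ j] j0_def by simp
    show ?thesis using qcong_left[OF 1] qcong_right[OF 2] by simp
  qed
  finally show ?thesis .
qed

lemma pball_sub: "pball p \<gamma> c \<subseteq> Qp p"
  unfolding pball_def by auto

lemma psub_pball:
  assumes p: "prime p" and x: "x \<in> Qp p" and b: "b \<in> Qp p" and c: "c \<in> Qp p"
  shows "psub p x b \<in> pball p \<gamma> c \<longleftrightarrow> x \<in> pball p \<gamma> (padd p c b)"
proof -
  have p0: "p > 0" using p prime_gt_0_nat by blast
  define j where "j = nat (- \<gamma>)"
  have jj: "nat (- \<gamma>) \<le> j" unfolding j_def by simp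
  have "psub p x b \<in> pball p \<gamma> c \<longleftrightarrow> qcong (psub p x b j) (c j) (mu p \<gamma>)"
    by (rule pball_char[OF p c psub_Qp[OF p0 x b] jj])
  also have "\<dots> \<longleftrightarrow> qcong (x j - b j) (c j) (mu p \<gamma>)"
    unfolding psub_def by (rule qcong_left[OF qcong_mu_rmod[OF p0 jj]])
  also have "\<dots> \<longleftrightarrow> qcong (x j) (c j + b j) (mu p \<gamma>)"
    by (rule qcong_diff_iff)
  also have "\<dots> \<longleftrightarrow> qcong (x j) (padd p c b j) (mu p \<gamma>)"
    unfolding padd_def by (rule qcong_right[OF qcong_sym[OF qcong_mu_rmod[OF p0 jj]]])
  also have "\<dots> \<longleftrightarrow> x \<in> pball p \<gamma> (padd p c b)"
    by (rule pball_char[OF p padd_Qp[OF p0 c b] x jj, symmetric])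
  finally show ?thesis .
qed

lemma pdivp_pball:
  assumes p: "prime p" and x: "x \<in> Qp p" and a: "a \<in> Qp p" and c: "c \<in> Qp p"
  shows "psub p (pdivp p x) a \<in> pball p \<gamma> c \<longleftrightarrow> x \<in> pball p (\<gamma> - 1) (dd p a c)"
proof -
  have p0: "p > 0" using p prime_gt_0_nat by blast
  define j where "j = nat (- \<gamma>)"
  have jj: "nat (- \<gamma>) \<le> j" unfolding j_def by simp
  have jj': "nat (- (\<gamma> - 1)) \<le> Suc j" unfolding j_def by simp
  have pp: "(of_nat p :: rat) \<noteq> 0" using p0 by simp
  have "psub p (pdivp p x) a \<in> pball p \<gamma> c \<longleftrightarrow> qcong (psub p (pdivp p x) a j) (c j) (mu p \<gamma>)"
    by (rule pball_char[OF p c psub_Qp[OF p0 pdivp_Qp[OF p0 x] a] jj])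
  also have "\<dots> \<longleftrightarrow> qcong (x (Suc j) / of_nat p - a j) (c j) (mu p \<gamma>)"
    unfolding psub_def pdivp_def by (rule qcong_left[OF qcong_mu_rmod[OF p0 jj]])
  also have "\<dots> \<longleftrightarrow> qcong (x (Suc j) / of_nat p) (c j + a j) (mu p \<gamma>)"
    by (rule qcong_diff_iff)
  also have "\<dots> \<longleftrightarrow> qcong (of_nat p * (x (Suc j) / of_nat p)) (of_nat p * (c j + a j)) (of_nat p * mu p \<gamma>)"
    by (rule qcong_scale[OF pp, symmetric])
  also have "\<dots> \<longleftrightarrow> qcong (x (Suc j)) (of_nat p * (a j + c j)) (mu p (\<gamma> - 1))"
    using pp by (simp add: mu_minus1[OF p0] add.commute)
  also have "\<dots> \<longleftrightarrow> qcong (x (Suc j)) (dd p a c (Suc j)) (mu p (\<gamma> - 1))"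
  proof (rule qcong_right)
    have "qcong (a j + c j) (a (Suc j) + c (Suc j)) (of_nat (p ^ j))"
      by (intro qcong_add Qp_cong_Suc a c)
    then have "qcong (of_nat p * (a j + c j)) (of_nat p * (a (Suc j) + c (Suc j))) (of_nat (p ^ Suc j))"
      using qcong_timesp p0 by blast
    then have 1: "qcong (of_nat p * (a j + c j)) (of_nat p * (a (Suc j) + c (Suc j))) (mu p (\<gamma> - 1))"
      by (rule qcong_mu_pow[OF p0 jj'])
    have 2: "qcong (of_nat p * (a (Suc j) + c (Suc j))) (dd p a c (Suc j)) (mu p (\<gamma> - 1))"
      unfolding dd_def by (rule qcong_sym[OF qcong_mu_rmod[OF p0 jj']])
    show "qcong (of_nat p * (a j + c j)) (dd p a c (Suc j)) (mu p (\<gamma> - 1))"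
      using qcong_trans[OF 1 2] .
  qed
  also have "\<dots> \<longleftrightarrow> x \<in> pball p (\<gamma> - 1) (dd p a c)"
    by (rule pball_char[OF p dd_Qp[OF p0 a c] x jj', symmetric])
  finally show ?thesis .
qed


definition balls :: "nat \<Rightarrow> padic set set" where
  "balls p = (\<lambda>(\<gamma>, a). pball p \<gamma> a) ` {(\<gamma>, a). a \<in> Qp p}"

lemma balls_Pow: "balls p \<subseteq> Pow (Qp p)"
  unfolding balls_def pball_def by auto

lemma pball_in_balls: "a \<in> Qp p \<Longrightarrow> pball p \<gamma> a \<in> balls p"
  unfolding balls_def by auto

lemma space_haar: "space (haar p) = Qp p"
  unfolding haar_def using balls_Pow[of p] unfolding balls_def
  by (intro space_extend_measure) auto

lemma sets_haar: "sets (haar p) = sigma_sets (Qp p) (balls p)"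
  unfolding haar_def using balls_Pow[of p] unfolding balls_def
  by (intro sets_extend_measure) auto

definition haar_ok :: "nat \<Rightarrow> bool" where
  "haar_ok p \<longleftrightarrow> (\<forall>\<gamma> a. a \<in> Qp p \<longrightarrow> emeasure (haar p) (pball p \<gamma> a) = ennreal (real p powi \<gamma>))"

lemma haar_cases: "haar_ok p \<or> (\<forall>A. emeasure (haar p) A = 0)"
proof -
  let ?I = "{(\<gamma>, a). a \<in> Qp p}"
  let ?G = "\<lambda>(\<gamma>, a). pball p \<gamma> a"
  let ?\<mu> = "\<lambda>(\<gamma>::int, a::padic). ennreal (real p powi \<gamma>)"
  have GP: "?G ` ?I \<subseteq> Pow (Qp p)" using balls_Pow[of p] unfolding balls_def by simp
  show ?thesis
  proof (cases "\<exists>\<mu>'. (\<forall>i\<in>?I. \<mu>' (?G i) = ?\<mu> i) \<and> measure_space (Qp p) (sigma_sets (Qp p) (?G ` ?I)) \<mu>'")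
    case True
    then obtain \<mu>' where eq: "\<forall>i\<in>?I. \<mu>' (?G i) = ?\<mu> i"
      and ms: "measure_space (Qp p) (sigma_sets (Qp p) (?G ` ?I)) \<mu>'" by blast
    have sM: "sets (haar p) = sigma_sets (Qp p) (?G ` ?I)"
      using sets_haar[of p] unfolding balls_def by simp
    have pos: "positive (sets (haar p)) \<mu>'" and ca: "countably_additive (sets (haar p)) \<mu>'"
      using ms unfolding measure_space_def sM by auto
    have "haar_ok p"
      unfolding haar_ok_def
    proof (intro allI impI)
      fix \<gamma> a assume a: "a \<in> Qp p"
      have "emeasure (haar p) (?G (\<gamma>, a)) = ?\<mu> (\<gamma>, a)"
        by (rule emeasure_extend_measure[OF haar_def _ GP pos ca]) (use eq a in auto)
      then show "emeasure (haar p) (pball p \<gamma> a) = ennreal (real p powi \<gamma>)" by simp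
    qed
    then show ?thesis by simp
  next
    case False
    then have c: "\<not> ((\<exists>\<mu>'. (\<forall>i\<in>?I. \<mu>' (?G i) = ?\<mu> i) \<and> measure_space (Qp p) (sigma_sets (Qp p) (?G ` ?I)) \<mu>') \<and> \<not> (\<forall>i\<in>?I. ?\<mu> i = 0))"
      by blast
    have "haar p = measure_of (Qp p) (?G ` ?I) (\<lambda>_. 0)"
      unfolding haar_def extend_measure_def by (rule if_not_P[OF c])
    then have "emeasure (haar p) A = 0" for A by (simp add: emeasure_measure_of_conv)
    then show ?thesis by simp
  qed
qed

lemma null_AE: assumes "\<forall>A. emeasure (haar p) A = 0" shows "AE x in haar p. P x"
  by (rule AE_I'[of "space (haar p)"]) (use assms in auto)

lemma pzero_Qp: assumes "p > 0" shows "pzero \<in> Qp p"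
  unfolding Qp_def pzero_def rmod_def using assms pint_int[of p 0] by simp

lemma mu_rel: assumes "p > 0" "\<gamma> \<le> \<gamma>'" shows "mu p \<gamma> = of_int (int p ^ nat (\<gamma>' - \<gamma>)) * mu p \<gamma>'"
proof -
  have "mu p \<gamma> = of_nat p powi ((\<gamma>' - \<gamma>) + (- \<gamma>'))" unfolding mu_def by simp
  also have "\<dots> = of_nat p powi (\<gamma>' - \<gamma>) * of_nat p powi (- \<gamma>')"
    using assms by (intro power_int_add) simp
  also have "of_nat p powi (\<gamma>' - \<gamma>) = (of_nat p :: rat) ^ nat (\<gamma>' - \<gamma>)"
  proof -
    obtain d where d: "\<gamma>' - \<gamma> = int d" using assms(2) zero_le_imp_eq_int by (metis diff_ge_0_iff_ge)
    then show ?thesis by simp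
  qed
  finally show ?thesis unfolding mu_def by simp
qed

lemma ball_mono:
  assumes p: "prime p" and a: "a \<in> Qp p" and a': "a' \<in> Qp p" and g: "\<gamma> \<le> \<gamma>'"
    and x: "x \<in> pball p \<gamma> a" "x \<in> pball p \<gamma>' a'"
  shows "pball p \<gamma> a \<subseteq> pball p \<gamma>' a'"
proof
  have p0: "p > 0" using p prime_gt_0_nat by blast
  define j where "j = nat (- \<gamma>)"
  have j: "nat (- \<gamma>) \<le> j" "nat (- \<gamma>') \<le> j" unfolding j_def using g by auto
  have xQ: "x \<in> Qp p" using x pball_sub by blast
  have mr: "mu p \<gamma> = of_int (int p ^ nat (\<gamma>' - \<gamma>)) * mu p \<gamma>'" by (rule mu_rel[OF p0 g])
  have "qcong (x j) (a j) (mu p \<gamma>)" using x(1) pball_char[OF p a xQ j(1)] by simp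
  then have 1: "qcong (x j) (a j) (mu p \<gamma>')" by (rule qcong_weaken[OF _ mr])
  have 2: "qcong (x j) (a' j) (mu p \<gamma>')" using x(2) pball_char[OF p a' xQ j(2)] by simp
  fix y assume y: "y \<in> pball p \<gamma> a"
  have yQ: "y \<in> Qp p" using y pball_sub by blast
  have "qcong (y j) (a j) (mu p \<gamma>)" using y pball_char[OF p a yQ j(1)] by simp
  then have "qcong (y j) (a j) (mu p \<gamma>')" by (rule qcong_weaken[OF _ mr])
  then have "qcong (y j) (a' j) (mu p \<gamma>')" by (rule qcong_trans[OF qcong_trans[OF _ qcong_sym[OF 1]] 2])
  then show "y \<in> pball p \<gamma>' a'" using pball_char[OF p a' yQ j(2)] by simp
qed

lemma sigma_sets_insert_empty: "sigma_sets \<Omega> (insert {} E) = sigma_sets \<Omega> E"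
proof
  show "sigma_sets \<Omega> (insert {} E) \<subseteq> sigma_sets \<Omega> E"
    by (rule sigma_sets_mono) (auto intro: sigma_sets.Basic sigma_sets.Empty)
  show "sigma_sets \<Omega> E \<subseteq> sigma_sets \<Omega> (insert {} E)"
    by (rule sigma_sets_mono') auto
qed

lemma pball_cover: assumes p: "prime p" and x: "x \<in> Qp p" shows "\<exists>i::nat. x \<in> pball p (int i) pzero"
proof -
  have p0: "p > 0" using p prime_gt_0_nat by blast
  obtain m k where mk: "x 0 = of_int m / of_nat (p ^ k)" using Qp_pint[OF x, of 0] unfolding pint_def by blast
  have "mu p (int k) = 1 / of_nat (p ^ k)" unfolding mu_def by (simp add: power_int_minus_divide)
  then have "qcong (x 0) (pzero 0) (mu p (int k))"
    unfolding qcong_def pzero_def mk by (intro exI[of _ m]) simp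
  then have "x \<in> pball p (int k) pzero" using pball_char[OF p pzero_Qp[OF p0] x, of "int k" 0] by simp
  then show ?thesis by blast
qed

lemma meas_haar:
  assumes p: "prime p" and T: "T \<in> Qp p \<rightarrow> Qp p"
    and pre: "\<And>\<gamma> c. c \<in> Qp p \<Longrightarrow> \<exists>\<gamma>' c'. c' \<in> Qp p \<and> T -` pball p \<gamma> c \<inter> Qp p = pball p \<gamma>' c'"
  shows "T \<in> haar p \<rightarrow>\<^sub>M haar p"
proof (rule measurable_sigma_sets[OF sets_haar balls_Pow])
  show "T \<in> space (haar p) \<rightarrow> Qp p" using T space_haar by simp
  fix y assume "y \<in> balls p"
  then obtain \<gamma> c where c: "c \<in> Qp p" and y: "y = pball p \<gamma> c" unfolding balls_def by auto
  obtain \<gamma>' c' where "c' \<in> Qp p" "T -` pball p \<gamma> c \<inter> Qp p = pball p \<gamma>' c'" using pre[OF c] by blast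
  then show "T -` y \<inter> space (haar p) \<in> sets (haar p)"
    unfolding y space_haar sets_haar by (auto intro!: sigma_sets.Basic pball_in_balls)
qed

lemma distr_haar:
  assumes p: "prime p" and ok: "haar_ok p" and T: "T \<in> Qp p \<rightarrow> Qp p"
    and pre: "\<And>\<gamma> c. c \<in> Qp p \<Longrightarrow> \<exists>c'. c' \<in> Qp p \<and> T -` pball p \<gamma> c \<inter> Qp p = pball p (\<gamma> - s) c'"
  shows "distr (haar p) (haar p) T = scale_measure (ennreal (real p powi (- s))) (haar p)"
proof -
  have p0: "p > 0" using p prime_gt_0_nat by blast
  have Tm: "T \<in> haar p \<rightarrow>\<^sub>M haar p"
  proof (rule meas_haar[OF p T])
    fix \<gamma> c assume c: "c \<in> Qp p"
    obtain c' where "c' \<in> Qp p" "T -` pball p \<gamma> c \<inter> Qp p = pball p (\<gamma> - s) c'" using pre[OF c] by blast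
    then show "\<exists>\<gamma>' c'. c' \<in> Qp p \<and> T -` pball p \<gamma> c \<inter> Qp p = pball p \<gamma>' c'" by blast
  qed
  let ?E = "insert {} (balls p)"
  have pos: "real p powi g > 0" for g using p0 by simp
  have ed: "emeasure (distr (haar p) (haar p) T) (pball p \<gamma> c) = ennreal (real p powi (\<gamma> - s))"
    if c: "c \<in> Qp p" for \<gamma> c
  proof -
    obtain c' where c': "c' \<in> Qp p" and pc: "T -` pball p \<gamma> c \<inter> Qp p = pball p (\<gamma> - s) c'" using pre[OF c] by blast
    have Xs: "pball p \<gamma> c \<in> sets (haar p)" unfolding sets_haar by (auto intro!: sigma_sets.Basic pball_in_balls c)
    have "emeasure (distr (haar p) (haar p) T) (pball p \<gamma> c) = emeasure (haar p) (pball p (\<gamma> - s) c')"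
      using emeasure_distr[OF Tm Xs] pc unfolding space_haar by simp
    also have "\<dots> = ennreal (real p powi (\<gamma> - s))" using ok c' unfolding haar_ok_def by blast
    finally show ?thesis .
  qed
  show ?thesis
  proof (rule measure_eqI_generator_eq[where E = ?E and \<Omega> = "Qp p" and A = "\<lambda>i. pball p (int i) pzero"])
    show "Int_stable ?E"
    proof (rule Int_stableI)
      fix A B assume A: "A \<in> ?E" and B: "B \<in> ?E"
      show "A \<inter> B \<in> ?E"
      proof (cases "A = {} \<or> B = {} \<or> A \<inter> B = {}")
        case True then show ?thesis by auto
      next
        case False
        then have AB: "A \<in> balls p" "B \<in> balls p" using A B by auto
        then obtain \<gamma> a \<gamma>' a' where a: "a \<in> Qp p" "A = pball p \<gamma> a" and a': "a' \<in> Qp p" "B = pball p \<gamma>' a'"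
          unfolding balls_def by auto
        from False obtain x where x: "x \<in> A" "x \<in> B" by blast
        show ?thesis
        proof (cases "\<gamma> \<le> \<gamma>'")
          case True
          then have "A \<subseteq> B" using ball_mono[OF p a(1) a'(1) True] x a a' by blast
          then show ?thesis using AB by (simp add: Int_absorb2)
        next
          case False
          then have g': "\<gamma>' \<le> \<gamma>" by simp
          have "B \<subseteq> A" using ball_mono[OF p a'(1) a(1) g'] x a a' by blast
          then show ?thesis using AB by (simp add: Int_absorb1)
        qed
      qed
    qed
    show "?E \<subseteq> Pow (Qp p)" using balls_Pow by auto
    show "sets (distr (haar p) (haar p) T) = sigma_sets (Qp p) ?E"
      by (simp add: sets_haar sigma_sets_insert_empty)
    show "sets (scale_measure (ennreal (real p powi - s)) (haar p)) = sigma_sets (Qp p) ?E"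
      by (simp add: sets_haar sigma_sets_insert_empty)
    show "range (\<lambda>i. pball p (int i) pzero) \<subseteq> ?E"
    proof
      fix X assume "X \<in> range (\<lambda>i. pball p (int i) pzero)"
      then obtain i where "X = pball p (int i) pzero" by blast
      then show "X \<in> ?E" using pball_in_balls[OF pzero_Qp[OF p0]] by simp
    qed
    show "(\<Union>i. pball p (int i) pzero) = Qp p"
    proof
      show "(\<Union>i. pball p (int i) pzero) \<subseteq> Qp p" by (rule UN_least) (rule pball_sub)
      show "Qp p \<subseteq> (\<Union>i. pball p (int i) pzero)"
      proof
        fix x assume "x \<in> Qp p"
        then obtain i :: nat where "x \<in> pball p (int i) pzero" using pball_cover[OF p] by blast
        then show "x \<in> (\<Union>i. pball p (int i) pzero)" by blast
      qed
    qed
    fix X assume X: "X \<in> ?E"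
    show "emeasure (distr (haar p) (haar p) T) X = emeasure (scale_measure (ennreal (real p powi - s)) (haar p)) X"
    proof (cases "X = {}")
      case True then show ?thesis by simp
    next
      case False
      then obtain \<gamma> c where c: "c \<in> Qp p" and Xe: "X = pball p \<gamma> c" using X unfolding balls_def by auto
      have "emeasure (distr (haar p) (haar p) T) X = ennreal (real p powi (\<gamma> - s))" unfolding Xe by (rule ed[OF c])
      also have "real p powi (\<gamma> - s) = real p powi (- s) * real p powi \<gamma>"
        using p0 power_int_add[of "real p" "- s" \<gamma>] by (simp add: algebra_simps)
      also have "ennreal \<dots> = ennreal (real p powi (- s)) * emeasure (haar p) X"
        using ok c unfolding Xe haar_ok_def by (simp add: ennreal_mult pos less_imp_le)
      finally show ?thesis by simp
    qed
  next
    fix i :: nat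
    show "emeasure (distr (haar p) (haar p) T) (pball p (int i) pzero) \<noteq> \<infinity>"
      using ed[OF pzero_Qp[OF p0]] by simp
  qed
qed


definition DD :: "'a measure \<Rightarrow> ('a \<Rightarrow> complex) \<Rightarrow> ennreal" where
  "DD M u = (\<integral>\<^sup>+x. ennreal ((cmod (u x))\<^sup>2) \<partial>M)"

lemma sq_ineq: "(cmod (a + b))\<^sup>2 \<le> 2 * (cmod a)\<^sup>2 + 2 * (cmod b)\<^sup>2"
proof -
  have "cmod (a + b) \<le> cmod a + cmod b" by (rule norm_triangle_ineq)
  then have 1: "(cmod (a + b))\<^sup>2 \<le> (cmod a + cmod b)\<^sup>2" by (rule power_mono) simp
  have "2 * (cmod a)\<^sup>2 + 2 * (cmod b)\<^sup>2 - (cmod a + cmod b)\<^sup>2 = (cmod a - cmod b)\<^sup>2"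
    by (simp add: power2_eq_square algebra_simps)
  moreover have "(cmod a - cmod b)\<^sup>2 \<ge> 0" by simp
  ultimately show ?thesis using 1 by linarith
qed

lemma DD_add: assumes "u \<in> borel_measurable M" "v \<in> borel_measurable M"
  shows "DD M (\<lambda>x. u x + v x) \<le> 2 * DD M u + 2 * DD M v"
proof -
  have "DD M (\<lambda>x. u x + v x) \<le> (\<integral>\<^sup>+x. (2 * ennreal ((cmod (u x))\<^sup>2) + 2 * ennreal ((cmod (v x))\<^sup>2)) \<partial>M)"
    unfolding DD_def
  proof (rule nn_integral_mono)
    fix x
    have "ennreal ((cmod (u x + v x))\<^sup>2) \<le> ennreal (2 * (cmod (u x))\<^sup>2 + 2 * (cmod (v x))\<^sup>2)"
      by (rule ennreal_leI[OF sq_ineq])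
    also have "\<dots> = 2 * ennreal ((cmod (u x))\<^sup>2) + 2 * ennreal ((cmod (v x))\<^sup>2)"
      by (simp add: ennreal_plus ennreal_mult)
    finally show "ennreal ((cmod (u x + v x))\<^sup>2) \<le> 2 * ennreal ((cmod (u x))\<^sup>2) + 2 * ennreal ((cmod (v x))\<^sup>2)" .
  qed
  also have "\<dots> = 2 * DD M u + 2 * DD M v"
  proof -
    have mu: "(\<lambda>x. ennreal ((cmod (u x))\<^sup>2)) \<in> borel_measurable M" using assms by measurable
    have mv: "(\<lambda>x. ennreal ((cmod (v x))\<^sup>2)) \<in> borel_measurable M" using assms by measurable
    have "(\<integral>\<^sup>+x. (2 * ennreal ((cmod (u x))\<^sup>2) + 2 * ennreal ((cmod (v x))\<^sup>2)) \<partial>M)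
       = (\<integral>\<^sup>+x. 2 * ennreal ((cmod (u x))\<^sup>2) \<partial>M) + (\<integral>\<^sup>+x. 2 * ennreal ((cmod (v x))\<^sup>2) \<partial>M)"
      using mu mv by (intro nn_integral_add) auto
    also have "\<dots> = 2 * DD M u + 2 * DD M v"
      unfolding DD_def using mu mv by (simp add: nn_integral_cmult)
    finally show ?thesis .
  qed
  finally show ?thesis .
qed

lemma DD_add_le: assumes "u \<in> borel_measurable M" "v \<in> borel_measurable M"
  "DD M u \<le> ennreal a" "DD M v \<le> ennreal b" "0 \<le> a" "0 \<le> b"
  shows "DD M (\<lambda>x. u x + v x) \<le> ennreal (2 * a + 2 * b)"
proof -
  have "DD M (\<lambda>x. u x + v x) \<le> 2 * DD M u + 2 * DD M v" by (rule DD_add[OF assms(1,2)])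
  also have "\<dots> \<le> 2 * ennreal a + 2 * ennreal b"
    using assms(3,4) by (intro add_mono mult_left_mono) auto
  also have "\<dots> = ennreal (2 * a + 2 * b)"
    using assms(5,6) by (simp add: ennreal_plus ennreal_mult)
  finally show ?thesis .
qed

lemma DD_scale: assumes "u \<in> borel_measurable M"
  shows "DD M (\<lambda>x. c * u x) = ennreal ((cmod c)\<^sup>2) * DD M u"
proof -
  have "DD M (\<lambda>x. c * u x) = (\<integral>\<^sup>+x. ennreal ((cmod c)\<^sup>2) * ennreal ((cmod (u x))\<^sup>2) \<partial>M)"
    unfolding DD_def by (simp add: norm_mult power_mult_distrib ennreal_mult)
  also have "\<dots> = ennreal ((cmod c)\<^sup>2) * DD M u"
    unfolding DD_def using assms by (intro nn_integral_cmult) auto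
  finally show ?thesis .
qed

lemma DD_cong_AE: "AE x in M. u x = v x \<Longrightarrow> DD M u = DD M v"
  unfolding DD_def by (rule nn_integral_cong_AE) (auto elim: eventually_mono)

lemma DD_zero: assumes "u \<in> borel_measurable M" "DD M u = 0" shows "AE x in M. u x = 0"
proof -
  have "AE x in M. ennreal ((cmod (u x))\<^sup>2) = 0"
    using assms(2) unfolding DD_def using assms(1) by (subst nn_integral_0_iff_AE[symmetric]) auto
  then show ?thesis by (auto elim: eventually_mono)
qed

lemma DD_small_zero: assumes "\<And>\<epsilon>. \<epsilon> > 0 \<Longrightarrow> DD M u < ennreal \<epsilon>" shows "DD M u = 0"
proof -
  have "DD M u \<le> 0"
  proof (rule ennreal_le_epsilon)
    fix e :: real assume "0 < e"
    then show "DD M u \<le> 0 + ennreal e" using assms[of e] by simp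
  qed
  then show ?thesis by simp
qed

lemma DD_minus: "DD M (\<lambda>x. u x - v x) = DD M (\<lambda>x. v x - u x)"
  unfolding DD_def by (simp add: norm_minus_commute)


lemma fin_span:
  fixes H :: "nat \<Rightarrow> 'a \<Rightarrow> complex"
  assumes Hm: "\<And>k. H k \<in> borel_measurable M" and Hf: "\<And>k. DD M (H k) < \<infinity>"
  shows "f \<in> borel_measurable M \<Longrightarrow> DD M f < \<infinity> \<Longrightarrow>
    (\<forall>\<epsilon>>0. \<exists>c. DD M (\<lambda>x. f x - (\<Sum>k<n. c k * H k x)) < ennreal \<epsilon>) \<Longrightarrow>
    \<exists>h. AE x in M. f x = (\<Sum>k<n. h k * H k x)"
proof (induction n arbitrary: f)
  case 0
  then have "DD M f = 0" by (intro DD_small_zero) simp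
  then show ?case using DD_zero[OF 0(1)] by simp
next
  case (Suc n)
  note fm = Suc.prems(1) and ff = Suc.prems(2) and appr = Suc.prems(3)
  have summ: "(\<lambda>x. \<Sum>k<m. c k * H k x) \<in> borel_measurable M" for m c
    using Hm by measurable
  show ?case
  proof (cases "\<forall>\<epsilon>>0. \<exists>d. DD M (\<lambda>x. H n x - (\<Sum>k<n. d k * H k x)) < ennreal \<epsilon>")
    case True
    from Suc.IH[OF Hm Hf True] obtain d where d: "AE x in M. H n x = (\<Sum>k<n. d k * H k x)" by blast
    have "\<forall>\<epsilon>>0. \<exists>c. DD M (\<lambda>x. f x - (\<Sum>k<n. c k * H k x)) < ennreal \<epsilon>"
    proof (intro allI impI)
      fix \<epsilon> :: real assume "\<epsilon> > 0"
      then obtain c where c: "DD M (\<lambda>x. f x - (\<Sum>k<Suc n. c k * H k x)) < ennreal \<epsilon>" using appr by blast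
      have "AE x in M. f x - (\<Sum>k<Suc n. c k * H k x) = f x - (\<Sum>k<n. (c k + c n * d k) * H k x)"
        using d
      proof eventually_elim
        case (elim x)
        have "(\<Sum>k<Suc n. c k * H k x) = (\<Sum>k<n. c k * H k x) + c n * (\<Sum>k<n. d k * H k x)"
          using elim by simp
        also have "\<dots> = (\<Sum>k<n. (c k + c n * d k) * H k x)"
        proof -
          have "(\<Sum>k<n. (c k + c n * d k) * H k x) = (\<Sum>k<n. c k * H k x + c n * (d k * H k x))"
            by (simp add: algebra_simps)
          also have "\<dots> = (\<Sum>k<n. c k * H k x) + c n * (\<Sum>k<n. d k * H k x)"
            by (simp add: sum.distrib sum_distrib_left)
          finally show ?thesis by simp
        qed
        finally show ?case by simp
      qed
      then have "DD M (\<lambda>x. f x - (\<Sum>k<Suc n. c k * H k x)) = DD M (\<lambda>x. f x - (\<Sum>k<n. (c k + c n * d k) * H k x))"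
        by (rule DD_cong_AE)
      then have "DD M (\<lambda>x. f x - (\<Sum>k<n. (c k + c n * d k) * H k x)) < ennreal \<epsilon>"
        using c by simp
      then show "\<exists>c. DD M (\<lambda>x. f x - (\<Sum>k<n. c k * H k x)) < ennreal \<epsilon>"
        by (rule exI[of _ "\<lambda>k. c k + c n * d k"])
    qed
    from Suc.IH[OF fm ff this] obtain h where h: "AE x in M. f x = (\<Sum>k<n. h k * H k x)" by blast
    have "AE x in M. f x = (\<Sum>k<Suc n. (h(n := 0)) k * H k x)"
      using h by eventually_elim simp
    then show ?thesis by blast
  next
    case False
    then obtain \<epsilon>0 where e0: "\<epsilon>0 > 0" and e0b: "\<And>d. ennreal \<epsilon>0 \<le> DD M (\<lambda>x. H n x - (\<Sum>k<n. d k * H k x))"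
      by (auto simp: not_less)
    define c where "c j = (SOME c. DD M (\<lambda>x. f x - (\<Sum>k<Suc n. c k * H k x)) < ennreal (1 / (real j + 1)))" for j
    have cj: "DD M (\<lambda>x. f x - (\<Sum>k<Suc n. c j k * H k x)) < ennreal (1 / (real j + 1))" for j
    proof -
      have "\<exists>c. DD M (\<lambda>x. f x - (\<Sum>k<Suc n. c k * H k x)) < ennreal (1 / (real j + 1))"
        using appr by simp
      then show ?thesis unfolding c_def by (rule someI_ex)
    qed
    define Fr where "Fr = enn2real (DD M f)"
    have Fr: "DD M f = ennreal Fr" "Fr \<ge> 0" using ff unfolding Fr_def by auto
    have bound: "cmod (c j n) \<le> sqrt ((2 * Fr + 2) / \<epsilon>0)" for j
    proof -
      define g where "g x = (\<Sum>k<Suc n. c j k * H k x)" for x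
      have gm: "g \<in> borel_measurable M" unfolding g_def by (rule summ)
      have "DD M (\<lambda>x. g x - f x) \<le> ennreal 1"
      proof -
        have "DD M (\<lambda>x. g x - f x) = DD M (\<lambda>x. f x - g x)" by (rule DD_minus)
        also have "\<dots> < ennreal (1 / (real j + 1))" unfolding g_def by (rule cj)
        also have "\<dots> \<le> ennreal 1" by (intro ennreal_leI) (simp add: field_simps)
        finally show ?thesis by simp
      qed
      then have "DD M (\<lambda>x. f x + (g x - f x)) \<le> ennreal (2 * Fr + 2 * 1)"
        using fm gm Fr by (intro DD_add_le) auto
      then have Dg: "DD M g \<le> ennreal (2 * Fr + 2)" by simp
      show ?thesis
      proof (cases "c j n = 0")
        case True then show ?thesis using Fr e0 by simp
      next
        case False
        define d where "d k = - c j k / c j n" for k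
        have gx: "g x = c j n * (H n x - (\<Sum>k<n. d k * H k x))" for x
        proof -
          have "c j n * (\<Sum>k<n. d k * H k x) = (\<Sum>k<n. - (c j k * H k x))"
            unfolding d_def sum_distrib_left using False by (intro sum.cong) (auto simp: field_simps)
          then show ?thesis unfolding g_def by (simp add: algebra_simps sum_negf)
        qed
        have geq: "g = (\<lambda>x. c j n * (H n x - (\<Sum>k<n. d k * H k x)))" using gx by (intro ext) simp
        have "DD M g = ennreal ((cmod (c j n))\<^sup>2) * DD M (\<lambda>x. H n x - (\<Sum>k<n. d k * H k x))"
          unfolding geq using Hm summ by (intro DD_scale) measurable
        also have "\<dots> \<ge> ennreal ((cmod (c j n))\<^sup>2) * ennreal \<epsilon>0"
          using e0b by (intro mult_left_mono) auto
        finally have "ennreal ((cmod (c j n))\<^sup>2 * \<epsilon>0) \<le> ennreal (2 * Fr + 2)"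
          using Dg e0 by (simp add: ennreal_mult)
        then have "(cmod (c j n))\<^sup>2 * \<epsilon>0 \<le> 2 * Fr + 2" using Fr by (subst (asm) ennreal_le_iff) auto
        then have "(cmod (c j n))\<^sup>2 \<le> (2 * Fr + 2) / \<epsilon>0" using e0 by (simp add: field_simps)
        then show ?thesis by (rule real_le_rsqrt)
      qed
    qed
    have "bounded (range (\<lambda>j. c j n))"
      unfolding bounded_iff using bound by blast
    then obtain \<gamma> r where r: "strict_mono r" and lim: "((\<lambda>j. c j n) \<circ> r) \<longlonglongrightarrow> \<gamma>"
      using bounded_imp_convergent_subsequence by blast
    define Hr where "Hr = enn2real (DD M (H n))"
    have Hr: "DD M (H n) = ennreal Hr" "Hr \<ge> 0" using Hf[of n] unfolding Hr_def by auto
    define f' where "f' x = f x - \<gamma> * H n x" for x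
    have f'm: "f' \<in> borel_measurable M" unfolding f'_def using fm Hm by measurable
    have "DD M (\<lambda>x. f x + (- \<gamma>) * H n x) \<le> ennreal (2 * Fr + 2 * ((cmod (- \<gamma>))\<^sup>2 * Hr))"
      using fm Hm Fr Hr DD_scale[of "H n" M "- \<gamma>"] by (intro DD_add_le) (auto simp: ennreal_mult)
    then have f'f: "DD M f' < \<infinity>" unfolding f'_def by (simp add: order_le_less_trans)
    have approx': "\<forall>\<epsilon>>0. \<exists>c'. DD M (\<lambda>x. f' x - (\<Sum>k<n. c' k * H k x)) < ennreal \<epsilon>"
    proof (intro allI impI)
      fix \<epsilon> :: real assume ep: "\<epsilon> > 0"
      define \<delta> where "\<delta> = sqrt (\<epsilon> / (8 * (Hr + 1)))"
      have dpos: "\<delta> > 0" unfolding \<delta>_def using ep Hr by simp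
      obtain J1 where J1: "\<And>j. j \<ge> J1 \<Longrightarrow> cmod (c (r j) n - \<gamma>) < \<delta>"
        using lim dpos unfolding LIMSEQ_iff o_def by blast
      obtain J2 where J2: "inverse (real (Suc J2)) < \<epsilon> / 4" using ep reals_Archimedean[of "\<epsilon> / 4"] by auto
      define J where "J = max J1 J2"
      define cc where "cc = c (r J)"
      have "J \<le> r J" using r by (rule seq_suble)
      then have "J2 \<le> r J" unfolding J_def by simp
      then have "1 / (real (r J) + 1) \<le> inverse (real (Suc J2))"
        by (simp add: field_simps)
      then have "1 / (real (r J) + 1) \<le> \<epsilon> / 4" using J2 by linarith
      then have "ennreal (1 / (real (r J) + 1)) \<le> ennreal (\<epsilon> / 4)" by (rule ennreal_leI)
      then have D1: "DD M (\<lambda>x. f x - (\<Sum>k<Suc n. cc k * H k x)) \<le> ennreal (\<epsilon> / 4)"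
        using cj[of "r J"] unfolding cc_def by (meson less_imp_le order_trans)
      have cce: "cmod (cc n - \<gamma>) < \<delta>" unfolding cc_def J_def using J1 by simp
      have "(cmod (cc n - \<gamma>))\<^sup>2 \<le> \<delta>\<^sup>2" using cce by (intro power_mono) auto
      then have "(cmod (cc n - \<gamma>))\<^sup>2 * Hr \<le> \<delta>\<^sup>2 * Hr" using Hr by (intro mult_right_mono) auto
      also have "\<delta>\<^sup>2 * Hr = \<epsilon> / (8 * (Hr + 1)) * Hr" unfolding \<delta>_def using ep Hr by simp
      also have "\<dots> \<le> \<epsilon> / 8"
      proof -
        have "\<epsilon> / (8 * (Hr + 1)) * Hr = \<epsilon> / 8 * (Hr / (Hr + 1))" by (simp add: field_simps)
        also have "\<dots> \<le> \<epsilon> / 8 * 1" using ep Hr by (intro mult_left_mono) auto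
        finally show ?thesis by simp
      qed
      finally have small: "(cmod (cc n - \<gamma>))\<^sup>2 * Hr \<le> \<epsilon> / 8" .
      have D2: "DD M (\<lambda>x. (cc n - \<gamma>) * H n x) \<le> ennreal (\<epsilon> / 8)"
        using DD_scale[of "H n" M "cc n - \<gamma>"] Hm Hr small by (simp add: ennreal_mult[symmetric] ennreal_leI)
      have "DD M (\<lambda>x. (f x - (\<Sum>k<Suc n. cc k * H k x)) + (cc n - \<gamma>) * H n x) \<le> ennreal (2 * (\<epsilon> / 4) + 2 * (\<epsilon> / 8))"
        using fm summ Hm D1 D2 ep by (intro DD_add_le) auto
      also have "\<dots> < ennreal \<epsilon>" using ep by (intro ennreal_lessI) auto
      finally have "DD M (\<lambda>x. (f x - (\<Sum>k<Suc n. cc k * H k x)) + (cc n - \<gamma>) * H n x) < ennreal \<epsilon>" .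
      moreover have "(\<lambda>x. (f x - (\<Sum>k<Suc n. cc k * H k x)) + (cc n - \<gamma>) * H n x) = (\<lambda>x. f' x - (\<Sum>k<n. cc k * H k x))"
        unfolding f'_def by (auto simp: algebra_simps)
      ultimately show "\<exists>c'. DD M (\<lambda>x. f' x - (\<Sum>k<n. c' k * H k x)) < ennreal \<epsilon>" by auto
    qed
    from Suc.IH[OF f'm f'f approx'] obtain h where h: "AE x in M. f' x = (\<Sum>k<n. h k * H k x)" by blast
    have "AE x in M. f x = (\<Sum>k<Suc n. (h(n := \<gamma>)) k * H k x)"
      using h by eventually_elim (simp add: f'_def algebra_simps)
    then show ?thesis by blast
  qed
qed


lemma padd_pzero: assumes "b \<in> Qp p" shows "padd p pzero b = b"
proof
  fix n show "padd p pzero b n = b n"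
    unfolding padd_def pzero_def using Qp_bounds[OF assms, of n] by (simp add: rmod_id)
qed

lemma R_char: assumes p: "prime p" and b: "b \<in> Qp p" and x: "x \<in> Qp p"
  shows "x \<in> pball p (int N) b \<longleftrightarrow> qcong (x 0) (b 0) (mu p (int N))"
  using pball_char[OF p b x, of "int N" 0] by simp

lemma S_char: assumes p: "prime p" and a: "a \<in> Qp p" and x: "x \<in> Qp p"
  shows "psub p (pdivp p x) a \<in> pball p (int N) pzero \<longleftrightarrow> qcong (x (Suc 0) / of_nat p) (a 0) (mu p (int N))"
proof -
  have p0: "p > 0" using p prime_gt_0_nat by blast
  have j: "nat (- int N) \<le> 0" by simp
  have "psub p (pdivp p x) a \<in> pball p (int N) pzero \<longleftrightarrow> qcong (psub p (pdivp p x) a 0) (pzero 0) (mu p (int N))"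
    by (rule pball_char[OF p pzero_Qp[OF p0] psub_Qp[OF p0 pdivp_Qp[OF p0 x] a] j])
  also have "\<dots> \<longleftrightarrow> qcong (x (Suc 0) / of_nat p - a 0) 0 (mu p (int N))"
    unfolding psub_def pdivp_def pzero_def by (rule qcong_left[OF qcong_mu_rmod[OF p0 j]])
  also have "\<dots> \<longleftrightarrow> qcong (x (Suc 0) / of_nat p) (a 0) (mu p (int N))"
    by (simp add: qcong_diff_iff)
  finally show ?thesis .
qed

lemma b_char: assumes p: "prime p" and b: "b \<in> Qp p" and nb: "pnorm p b \<le> real p ^ N"
  shows "qcong (b 0) 0 (mu p (int N))"
proof -
  have "pnorm p b \<le> real p powi (int N)" using nb by simp
  then show ?thesis using pnorm_le[OF p b, of "int N"] by simp
qed

lemma x1_cong: assumes p: "prime p" and x: "x \<in> Qp p" and c: "qcong (x (Suc 0) / of_nat p) v (mu p (int N))"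
  shows "qcong (x (Suc 0)) (of_nat p * v) (mu p (int N))"
proof -
  have p0: "p > 0" using p prime_gt_0_nat by blast
  have pp: "(of_nat p :: rat) \<noteq> 0" using p0 by simp
  have "qcong (of_nat p * (x (Suc 0) / of_nat p)) (of_nat p * v) (of_nat p * mu p (int N))"
    by (subst qcong_scale[OF pp]) (rule c)
  then have "qcong (x (Suc 0)) (of_nat p * v) (of_nat p * mu p (int N))" using pp by simp
  then show ?thesis by (rule qcong_weaken[where j = "int p"]) simp
qed

lemma x01: assumes p: "prime p" and x: "x \<in> Qp p" shows "qcong (x 0) (x (Suc 0)) (mu p (int N))"
proof -
  have p0: "p > 0" using p prime_gt_0_nat by blast
  show ?thesis by (rule Qp_cong_mu[OF x p0]) simp_all
qed

lemma G_lemma: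
  assumes p: "prime p" and x: "x \<in> Qp p" and a: "a \<in> Ip p"
    and c0: "qcong (x 0) 0 (mu p (int N))" and c1: "qcong (x (Suc 0) / of_nat p) (a 0) (mu p (int N))"
  shows "\<exists>k<p ^ (N + 1). a = qemb p (of_nat k / of_nat (p ^ (N + 1)))"
proof -
  have p0: "p > 0" using p prime_gt_0_nat by blast
  have aQ: "a \<in> Qp p" using a unfolding Ip_def by simp
  have A: "qcong (x (Suc 0)) (of_nat p * a 0) (mu p (int N))" by (rule x1_cong[OF p x c1])
  have "qcong (of_nat p * a 0) 0 (mu p (int N))"
    by (rule qcong_trans[OF qcong_sym[OF A] qcong_trans[OF qcong_sym[OF x01[OF p x]] c0]])
  then obtain t where t: "of_nat p * a 0 = of_int t * mu p (int N)" unfolding qcong_def by auto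
  have mu: "mu p (int N) = 1 / of_nat (p ^ N)" unfolding mu_def by (simp add: power_int_minus_divide)
  have a0: "a 0 = of_int t / of_nat (p ^ (N + 1))" using t p0 unfolding mu by (simp add: field_simps)
  have ab: "0 \<le> a 0" "a 0 < 1" using Qp_bounds[OF aQ, of 0] by auto
  have tb: "0 \<le> t" "t < int (p ^ (N + 1))"
  proof -
    have pos: "(of_nat (p ^ (N + 1)) :: rat) > 0" using p0 by simp
    have "of_int t = a 0 * of_nat (p ^ (N + 1))" using a0 pos p0 by (simp add: field_simps)
    moreover have "a 0 * of_nat (p ^ (N + 1)) < 1 * of_nat (p ^ (N + 1))"
      using ab(2) pos by (rule mult_strict_right_mono)
    moreover have "0 \<le> a 0 * of_nat (p ^ (N + 1))" using ab(1) pos by simp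
    ultimately have "(0::rat) \<le> of_int t" "(of_int t :: rat) < of_int (int (p ^ (N + 1)))" by simp_all
    then show "0 \<le> t" "t < int (p ^ (N + 1))" by (simp_all only: of_int_less_iff of_int_0_le_iff)
  qed
  define k where "k = nat t"
  have k1: "k < p ^ (N + 1)" unfolding k_def using tb nat_less_iff by blast
  have "(of_nat k :: rat) = of_int t" unfolding k_def using tb(1) by simp
  then have k: "k < p ^ (N + 1)" "a 0 = of_nat k / of_nat (p ^ (N + 1))" using k1 a0 by simp_all
  have "a = pfrac p a" using a unfolding Ip_def by simp
  also have "\<dots> = qemb p (of_nat k / of_nat (p ^ (N + 1)))" unfolding pfrac_def k(2) ..
  finally show ?thesis using k(1) by blast
qed

lemma dich_lemma:
  assumes p: "prime p" and x: "x \<in> Qp p" and x': "x' \<in> Qp p"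
    and cx: "qcong (x 0) (b0) (mu p (int N))"
    and s: "qcong (x (Suc 0) / of_nat p) v (mu p (int N))" and s': "qcong (x' (Suc 0) / of_nat p) v (mu p (int N))"
  shows "qcong (x' 0) b0 (mu p (int N))"
proof -
  have 1: "qcong (x (Suc 0)) (of_nat p * v) (mu p (int N))" by (rule x1_cong[OF p x s])
  have 2: "qcong (x' (Suc 0)) (of_nat p * v) (mu p (int N))" by (rule x1_cong[OF p x' s'])
  have "qcong (x' 0) (x' (Suc 0)) (mu p (int N))" by (rule x01[OF p x'])
  then have "qcong (x' 0) (x (Suc 0)) (mu p (int N))"
    by (rule qcong_trans[OF _ qcong_trans[OF 2 qcong_sym[OF 1]]])
  then have "qcong (x' 0) (x 0) (mu p (int N))"
    by (rule qcong_trans[OF _ qcong_sym[OF x01[OF p x]]])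
  then show ?thesis by (rule qcong_trans[OF _ cx])
qed

lemma qemb0: assumes "p > 0" "k < p ^ M" shows "qemb p (of_nat k / of_nat (p ^ M)) 0 = of_nat k / of_nat (p ^ M)"
proof -
  have "(0::rat) \<le> of_nat k / of_nat (p ^ M)" by simp
  moreover have "of_nat k / of_nat (p ^ M) < (1::rat)" using assms by simp
  ultimately show ?thesis unfolding qemb_def by (simp add: rmod_id)
qed

lemma e_inj: assumes "p > 0" "k < p ^ M" "k' < p ^ M"
  and "qemb p (of_nat k / of_nat (p ^ M)) = qemb p (of_nat k' / of_nat (p ^ M))"
  shows "k = k'"
proof -
  have "qemb p (of_nat k / of_nat (p ^ M)) 0 = qemb p (of_nat k' / of_nat (p ^ M)) 0"
    using assms(4) by simp
  then have "(of_nat k / of_nat (p ^ M) :: rat) = of_nat k' / of_nat (p ^ M)"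
    unfolding qemb0[OF assms(1,2)] qemb0[OF assms(1,3)] .
  then show ?thesis using assms(1) by simp
qed

lemma e_Qp: assumes "p > 0" shows "qemb p (of_nat k / of_nat (p ^ M)) \<in> Qp p"
proof (rule qemb_Qp[OF assms])
  show "pint p (of_nat k / of_nat (p ^ M))" unfolding pint_def by (intro exI[of _ "int k"] exI[of _ M]) simp
qed


lemma AE_pull:
  assumes Tm: "T \<in> haar p \<rightarrow>\<^sub>M haar p" and eq: "distr (haar p) (haar p) T = scale_measure r (haar p)"
    and ae: "AE y in haar p. P y"
  shows "AE x in haar p. P (T x)"
proof -
  from ae obtain N where N: "{x \<in> space (haar p). \<not> P x} \<subseteq> N" "emeasure (haar p) N = 0" "N \<in> sets (haar p)"
    by (rule AE_E)
  have "AE y in scale_measure r (haar p). P y"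
    by (rule AE_I[of _ _ N]) (use N in \<open>auto simp: space_scale_measure\<close>)
  then have "AE y in distr (haar p) (haar p) T. P y" by (simp only: eq)
  then show ?thesis by (rule AE_distrD[OF Tm])
qed

lemma nn_pull:
  assumes Tm: "T \<in> haar p \<rightarrow>\<^sub>M haar p" and eq: "distr (haar p) (haar p) T = scale_measure r (haar p)"
    and g: "g \<in> borel_measurable (haar p)"
  shows "(\<integral>\<^sup>+x. g (T x) \<partial>haar p) = r * (\<integral>\<^sup>+x. g x \<partial>haar p)"
proof -
  have gm: "g \<in> borel_measurable (distr (haar p) (haar p) T)"
    using g measurable_cong_sets[of "distr (haar p) (haar p) T" "haar p" borel borel] by simp
  have "(\<integral>\<^sup>+x. g (T x) \<partial>haar p) = (\<integral>\<^sup>+x. g x \<partial>distr (haar p) (haar p) T)"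
    by (rule nn_integral_distr[OF Tm gm, symmetric])
  also have "\<dots> = r * (\<integral>\<^sup>+x. g x \<partial>haar p)" unfolding eq by (rule nn_integral_scale_measure[OF g])
  finally show ?thesis .
qed

lemma T_facts:
  assumes p: "prime p" and ok: "haar_ok p" and b: "b \<in> Qp p"
  shows "(\<lambda>x. psub p x b) \<in> haar p \<rightarrow>\<^sub>M haar p"
    "distr (haar p) (haar p) (\<lambda>x. psub p x b) = scale_measure (ennreal (real p powi (- 0))) (haar p)"
proof -
  have p0: "p > 0" using p prime_gt_0_nat by blast
  have T: "(\<lambda>x. psub p x b) \<in> Qp p \<rightarrow> Qp p" using psub_Qp[OF p0 _ b] by blast
  have pre: "(\<lambda>x. psub p x b) -` pball p \<gamma> c \<inter> Qp p = pball p (\<gamma> - 0) (padd p c b)" if c: "c \<in> Qp p" for \<gamma> c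
  proof -
    have "x \<in> (\<lambda>x. psub p x b) -` pball p \<gamma> c \<inter> Qp p \<longleftrightarrow> x \<in> pball p (\<gamma> - 0) (padd p c b)" for x
    proof (cases "x \<in> Qp p")
      case True then show ?thesis using psub_pball[OF p True b c] by simp
    next
      case False then show ?thesis using pball_sub by blast
    qed
    then show ?thesis by blast
  qed
  show "(\<lambda>x. psub p x b) \<in> haar p \<rightarrow>\<^sub>M haar p"
  proof (rule meas_haar[OF p T])
    fix \<gamma> c assume c: "c \<in> Qp p"
    show "\<exists>\<gamma>' c'. c' \<in> Qp p \<and> (\<lambda>x. psub p x b) -` pball p \<gamma> c \<inter> Qp p = pball p \<gamma>' c'"
      using pre[OF c] padd_Qp[OF p0 c b] by blast
  qed
  show "distr (haar p) (haar p) (\<lambda>x. psub p x b) = scale_measure (ennreal (real p powi (- 0))) (haar p)"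
  proof (rule distr_haar[OF p ok T])
    fix \<gamma> c assume c: "c \<in> Qp p"
    show "\<exists>c'. c' \<in> Qp p \<and> (\<lambda>x. psub p x b) -` pball p \<gamma> c \<inter> Qp p = pball p (\<gamma> - 0) c'"
      using pre[OF c] padd_Qp[OF p0 c b] by blast
  qed
qed

lemma S_facts:
  assumes p: "prime p" and ok: "haar_ok p" and a: "a \<in> Qp p"
  shows "(\<lambda>x. psub p (pdivp p x) a) \<in> haar p \<rightarrow>\<^sub>M haar p"
    "distr (haar p) (haar p) (\<lambda>x. psub p (pdivp p x) a) = scale_measure (ennreal (real p powi (- 1))) (haar p)"
proof -
  have p0: "p > 0" using p prime_gt_0_nat by blast
  have T: "(\<lambda>x. psub p (pdivp p x) a) \<in> Qp p \<rightarrow> Qp p" using psub_Qp[OF p0 pdivp_Qp[OF p0] a] by blast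
  have pre: "(\<lambda>x. psub p (pdivp p x) a) -` pball p \<gamma> c \<inter> Qp p = pball p (\<gamma> - 1) (dd p a c)" if c: "c \<in> Qp p" for \<gamma> c
  proof -
    have "x \<in> (\<lambda>x. psub p (pdivp p x) a) -` pball p \<gamma> c \<inter> Qp p \<longleftrightarrow> x \<in> pball p (\<gamma> - 1) (dd p a c)" for x
    proof (cases "x \<in> Qp p")
      case True then show ?thesis using pdivp_pball[OF p True a c] by simp
    next
      case False then show ?thesis using pball_sub by blast
    qed
    then show ?thesis by blast
  qed
  show "(\<lambda>x. psub p (pdivp p x) a) \<in> haar p \<rightarrow>\<^sub>M haar p"
  proof (rule meas_haar[OF p T])
    fix \<gamma> c assume c: "c \<in> Qp p"
    show "\<exists>\<gamma>' c'. c' \<in> Qp p \<and> (\<lambda>x. psub p (pdivp p x) a) -` pball p \<gamma> c \<inter> Qp p = pball p \<gamma>' c'"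
      using pre[OF c] dd_Qp[OF p0 a c] by blast
  qed
  show "distr (haar p) (haar p) (\<lambda>x. psub p (pdivp p x) a) = scale_measure (ennreal (real p powi (- 1))) (haar p)"
  proof (rule distr_haar[OF p ok T])
    fix \<gamma> c assume c: "c \<in> Qp p"
    show "\<exists>c'. c' \<in> Qp p \<and> (\<lambda>x. psub p (pdivp p x) a) -` pball p \<gamma> c \<inter> Qp p = pball p (\<gamma> - 1) c'"
      using pre[OF c] dd_Qp[OF p0 a c] by blast
  qed
qed

lemma DD_pull:
  assumes Tm: "T \<in> haar p \<rightarrow>\<^sub>M haar p" and eq: "distr (haar p) (haar p) T = scale_measure (ennreal r) (haar p)"
    and g: "g \<in> L2 p"
  shows "(\<lambda>x. g (T x)) \<in> borel_measurable (haar p)" "DD (haar p) (\<lambda>x. g (T x)) < \<infinity>"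
proof -
  have gm: "g \<in> borel_measurable (haar p)" and gi: "integrable (haar p) (\<lambda>x. (cmod (g x))\<^sup>2)"
    using g unfolding L2_def by auto
  show "(\<lambda>x. g (T x)) \<in> borel_measurable (haar p)" using measurable_compose[OF Tm gm] .
  have m2: "(\<lambda>x. ennreal ((cmod (g x))\<^sup>2)) \<in> borel_measurable (haar p)" using gm by measurable
  have fin: "(\<integral>\<^sup>+x. ennreal ((cmod (g x))\<^sup>2) \<partial>haar p) \<noteq> \<infinity>" using integrableD(2)[OF gi] .
  have "DD (haar p) (\<lambda>x. g (T x)) = ennreal r * (\<integral>\<^sup>+x. ennreal ((cmod (g x))\<^sup>2) \<partial>haar p)"
    unfolding DD_def by (rule nn_pull[OF Tm eq m2])
  then show "DD (haar p) (\<lambda>x. g (T x)) < \<infinity>" using fin by (simp add: ennreal_mult_less_top top.not_eq_extremum)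
qed


theorem proposition1:
  fixes p N :: nat and \<phi> \<psi> :: "padic \<Rightarrow> complex" and b :: padic
  assumes "prime p"
    and "\<phi> \<in> L2 p" and "\<psi> \<in> L2 p"
    and "AE x in haar p. x \<notin> pball p (int N) pzero \<longrightarrow> \<phi> x = 0"
    and "AE x in haar p. x \<notin> pball p (int N) pzero \<longrightarrow> \<psi> x = 0"
    and "b \<in> Ip p" and "pnorm p b \<le> real p ^ N"
    and "\<forall>\<epsilon>>0. \<exists>A c. finite A \<and> A \<subseteq> Ip p \<and>
           (\<integral>\<^sup>+ x. ennreal ((cmod (\<psi> (psub p x b)
               - (\<Sum>a\<in>A. c a * \<phi> (psub p (pdivp p x) a))))\<^sup>2) \<partial>haar p) < ennreal \<epsilon>"
  shows "\<exists>h :: nat \<Rightarrow> complex. AE x in haar p.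
           \<psi> (psub p x b) = (\<Sum>k<p ^ (N + 1).
              h k * \<phi> (psub p (pdivp p x) (qemb p (of_nat k / of_nat (p ^ (N + 1))))))"
proof -
  have p: "prime p" by (rule assms(1))
  have p0: "p > 0" using assms(1) prime_gt_0_nat by blast
  have bQ: "b \<in> Qp p" using assms(6) unfolding Ip_def by simp
  define P where "P = p ^ (N + 1)"
  define e where "e k = qemb p (of_nat k / of_nat (p ^ (N + 1)))" for k :: nat
  define S where "S a x = psub p (pdivp p x) a" for a x
  define B0 where "B0 = pball p (int N) pzero"
  define R where "R = pball p (int N) b"
  show ?thesis
  proof (cases "haar_ok p")
    case False
    then have z: "\<forall>A. emeasure (haar p) A = 0" using haar_cases by blast
    show ?thesis by (rule exI[of _ "\<lambda>_. 0"]) (rule null_AE[OF z])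
  next
    case ok: True
    have eQ: "e k \<in> Qp p" for k unfolding e_def by (rule e_Qp[OF p0])
    have Sm: "(\<lambda>x. S a x) \<in> haar p \<rightarrow>\<^sub>M haar p" if "a \<in> Qp p" for a
      unfolding S_def by (rule S_facts(1)[OF p ok that])
    have SD: "distr (haar p) (haar p) (\<lambda>x. S a x) = scale_measure (ennreal (real p powi (- 1))) (haar p)"
      if "a \<in> Qp p" for a
      unfolding S_def by (rule S_facts(2)[OF p ok that])
    define good where "good k \<longleftrightarrow> (\<forall>x\<in>Qp p. S (e k) x \<in> B0 \<longrightarrow> x \<in> R)" for k
    define H where "H k = (if good k then (\<lambda>x. \<phi> (S (e k) x)) else (\<lambda>x. 0))" for k
    have Hx: "H k x = (if good k then \<phi> (S (e k) x) else 0)" for k x unfolding H_def by simp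
    define f where "f x = \<psi> (psub p x b)" for x
    have Gm: "(\<lambda>x. \<phi> (S a x)) \<in> borel_measurable (haar p)" if "a \<in> Qp p" for a
      by (rule DD_pull(1)[OF Sm[OF that] SD[OF that] assms(2)])
    have Gf: "DD (haar p) (\<lambda>x. \<phi> (S a x)) < \<infinity>" if "a \<in> Qp p" for a
      by (rule DD_pull(2)[OF Sm[OF that] SD[OF that] assms(2)])
    have Hm: "H k \<in> borel_measurable (haar p)" for k
      using Gm[OF eQ] unfolding H_def by (cases "good k") auto
    have Hf: "DD (haar p) (H k) < \<infinity>" for k
      using Gf[OF eQ] unfolding H_def by (cases "good k") (auto simp: DD_def)
    have fm: "f \<in> borel_measurable (haar p)"
      unfolding f_def by (rule DD_pull(1)[OF T_facts(1)[OF p ok bQ] T_facts(2)[OF p ok bQ] assms(3)])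
    have ff: "DD (haar p) f < \<infinity>"
      unfolding f_def by (rule DD_pull(2)[OF T_facts(1)[OF p ok bQ] T_facts(2)[OF p ok bQ] assms(3)])
    have AN1: "AE x in haar p. psub p x b \<notin> B0 \<longrightarrow> \<psi> (psub p x b) = 0"
      unfolding B0_def by (rule AE_pull[OF T_facts(1)[OF p ok bQ] T_facts(2)[OF p ok bQ] assms(5)])
    have AN2: "AE x in haar p. S a x \<notin> B0 \<longrightarrow> \<phi> (S a x) = 0" if "a \<in> Qp p" for a
      unfolding B0_def by (rule AE_pull[OF Sm[OF that] SD[OF that] assms(4)])
    have TR: "psub p x b \<in> B0 \<longleftrightarrow> x \<in> R" if "x \<in> Qp p" for x
      using psub_pball[OF p that bQ pzero_Qp[OF p0], of "int N"] padd_pzero[OF bQ]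
      unfolding B0_def R_def by simp
    have bc: "qcong (b 0) 0 (mu p (int N))" by (rule b_char[OF p bQ assms(7)])
    have key: "\<exists>k<P. a = e k \<and> good k"
      if xQ: "x \<in> Qp p" and xR: "x \<in> R" and aI: "a \<in> Ip p" and sB: "S a x \<in> B0" for x a
    proof -
      have aQ: "a \<in> Qp p" using aI unfolding Ip_def by simp
      have cx: "qcong (x 0) (b 0) (mu p (int N))" using xR R_char[OF p bQ xQ] unfolding R_def by simp
      have c0: "qcong (x 0) 0 (mu p (int N))" by (rule qcong_trans[OF cx bc])
      have c1: "qcong (x (Suc 0) / of_nat p) (a 0) (mu p (int N))"
        using sB S_char[OF p aQ xQ] unfolding S_def B0_def by simp
      obtain k where k: "k < P" "a = e k" using G_lemma[OF p xQ aI c0 c1] unfolding P_def e_def by blast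
      have "good k" unfolding good_def
      proof (intro ballI impI)
        fix x' assume x'Q: "x' \<in> Qp p" and s': "S (e k) x' \<in> B0"
        have c1': "qcong (x' (Suc 0) / of_nat p) (a 0) (mu p (int N))"
          using s' S_char[OF p aQ x'Q] k(2) unfolding S_def B0_def by simp
        have "qcong (x' 0) (b 0) (mu p (int N))" by (rule dich_lemma[OF p xQ x'Q cx c1 c1'])
        then show "x' \<in> R" using R_char[OF p bQ x'Q] unfolding R_def by simp
      qed
      then show ?thesis using k by blast
    qed
    have approx: "\<forall>\<epsilon>>0. \<exists>c. DD (haar p) (\<lambda>x. f x - (\<Sum>k<P. c k * H k x)) < ennreal \<epsilon>"
    proof (intro allI impI)
      fix \<epsilon> :: real assume "\<epsilon> > 0"
      then obtain A c where A: "finite A" "A \<subseteq> Ip p" and I: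
        "(\<integral>\<^sup>+ x. ennreal ((cmod (\<psi> (psub p x b) - (\<Sum>a\<in>A. c a * \<phi> (psub p (pdivp p x) a))))\<^sup>2) \<partial>haar p) < ennreal \<epsilon>"
        using assms(8) by blast
      define c' where "c' k = (if e k \<in> A then c (e k) else 0)" for k
      have AQ: "A \<subseteq> Qp p" using A(2) unfolding Ip_def by auto
      let ?X = "A \<union> e ` {..<P}"
      have AE_all: "AE x in haar p. \<forall>a\<in>?X. S a x \<notin> B0 \<longrightarrow> \<phi> (S a x) = 0"
      proof (rule AE_ball_countable')
        fix a assume "a \<in> ?X"
        then have "a \<in> Qp p" using AQ eQ by blast
        then show "AE x in haar p. S a x \<notin> B0 \<longrightarrow> \<phi> (S a x) = 0" by (rule AN2)
      next
        show "countable ?X" using A(1) by (intro countable_finite) simp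
      qed
      have "AE x in haar p. ennreal ((cmod (f x - (\<Sum>k<P. c' k * H k x)))\<^sup>2)
          \<le> ennreal ((cmod (\<psi> (psub p x b) - (\<Sum>a\<in>A. c a * \<phi> (psub p (pdivp p x) a))))\<^sup>2)"
        using AE_all AN1 AE_space
      proof eventually_elim
        case (elim x)
        have xQ: "x \<in> Qp p" using elim(3) space_haar by simp
        show ?case
        proof (cases "x \<in> R")
          case True
          have per: "c a * \<phi> (S a x) = (\<Sum>k<P. if a = e k \<and> good k then c a * \<phi> (S a x) else 0)"
            if aA: "a \<in> A" for a
          proof (cases "\<phi> (S a x) = 0")
            case True
            have "(\<Sum>k<P. if a = e k \<and> good k then c a * \<phi> (S a x) else 0) = (\<Sum>k<P. (0::complex))"
              by (rule sum.cong[OF refl]) (simp only: True mult_zero_right if_cancel)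
            then show ?thesis using True by simp
          next
            case False
            then have "S a x \<in> B0" using elim(1) aA by blast
            then obtain k0 where k0: "k0 < P" "a = e k0" "good k0" using key[OF xQ True] A(2) aA by blast
            have "(\<Sum>k<P. if a = e k \<and> good k then c a * \<phi> (S a x) else 0) = (\<Sum>k<P. if k = k0 then c a * \<phi> (S a x) else 0)"
            proof (rule sum.cong[OF refl])
              fix k assume "k \<in> {..<P}"
              then have "k < P" by simp
              then have "a = e k \<and> good k \<longleftrightarrow> k = k0"
                using k0 e_inj[OF p0, of k "N+1" k0] unfolding e_def P_def by auto
              then show "(if a = e k \<and> good k then c a * \<phi> (S a x) else 0) = (if k = k0 then c a * \<phi> (S a x) else 0)"
                by simp
            qed
            also have "\<dots> = c a * \<phi> (S a x)" using k0(1) by simp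
            finally show ?thesis by simp
          qed
          have "(\<Sum>a\<in>A. c a * \<phi> (S a x)) = (\<Sum>a\<in>A. \<Sum>k<P. if a = e k \<and> good k then c a * \<phi> (S a x) else 0)"
            by (rule sum.cong[OF refl per])
          also have "\<dots> = (\<Sum>k<P. \<Sum>a\<in>A. if a = e k \<and> good k then c a * \<phi> (S a x) else 0)"
            by (rule sum.swap)
          also have "\<dots> = (\<Sum>k<P. c' k * H k x)"
          proof (rule sum.cong[OF refl])
            fix k
            have "(\<Sum>a\<in>A. if a = e k \<and> good k then c a * \<phi> (S a x) else 0)
                = (if good k then (\<Sum>a\<in>A. if a = e k then c a * \<phi> (S a x) else 0) else 0)" by simp
            also have "\<dots> = (if good k then (if e k \<in> A then c (e k) * \<phi> (S (e k) x) else 0) else 0)"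
              using A(1) by (simp add: sum.delta)
            also have "\<dots> = c' k * H k x" by (simp add: c'_def Hx)
            finally show "(\<Sum>a\<in>A. if a = e k \<and> good k then c a * \<phi> (S a x) else 0) = c' k * H k x" .
          qed
          finally have "(\<Sum>a\<in>A. c a * \<phi> (S a x)) = (\<Sum>k<P. c' k * H k x)" .
          then show ?thesis by (simp add: f_def S_def)
        next
          case False
          have "psub p x b \<notin> B0" using TR[OF xQ] False by simp
          then have f0: "f x = 0" using elim(2) unfolding f_def by simp
          have H0: "H k x = 0" if "k \<in> {..<P}" for k
          proof (cases "good k")
            case True
            show ?thesis
            proof (rule ccontr)
              assume "H k x \<noteq> 0"
              then have "\<phi> (S (e k) x) \<noteq> 0" using True Hx by simp
              then have "S (e k) x \<in> B0" using elim(1) that by blast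
              then have "x \<in> R" using True xQ unfolding good_def by blast
              then show False using False by simp
            qed
          next
            case False then show ?thesis by (simp add: Hx)
          qed
          have "(\<Sum>k<P. c' k * H k x) = 0" using H0 by simp
          then show ?thesis using f0 by simp
        qed
      qed
      then have "DD (haar p) (\<lambda>x. f x - (\<Sum>k<P. c' k * H k x))
          \<le> (\<integral>\<^sup>+ x. ennreal ((cmod (\<psi> (psub p x b) - (\<Sum>a\<in>A. c a * \<phi> (psub p (pdivp p x) a))))\<^sup>2) \<partial>haar p)"
        unfolding DD_def by (rule nn_integral_mono_AE)
      then have "DD (haar p) (\<lambda>x. f x - (\<Sum>k<P. c' k * H k x)) < ennreal \<epsilon>" using I by (rule le_less_trans)
      then show "\<exists>c. DD (haar p) (\<lambda>x. f x - (\<Sum>k<P. c k * H k x)) < ennreal \<epsilon>" by (rule exI[of _ c'])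
    qed
    obtain h where h: "AE x in haar p. f x = (\<Sum>k<P. h k * H k x)"
      using fin_span[OF Hm Hf fm ff approx] by blast
    have eqs: "h k * H k x = (if good k then h k else 0) * \<phi> (psub p (pdivp p x) (qemb p (of_nat k / of_nat (p ^ (N + 1)))))"
      for k x unfolding Hx S_def e_def by simp
    show ?thesis
    proof (rule exI[of _ "\<lambda>k. if good k then h k else 0"])
      show "AE x in haar p. \<psi> (psub p x b) = (\<Sum>k<p ^ (N + 1). (if good k then h k else 0) * \<phi> (psub p (pdivp p x) (qemb p (of_nat k / of_nat (p ^ (N + 1))))))"
        using h
      proof eventually_elim
        case (elim x)
        then show ?case unfolding f_def P_def eqs .
      qed
    qed
  qed
qed


end
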